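(* Let $(a:b:c:d)\in\mathbb{P}^3$ with $a+b=0$, and suppose that $X_{(a:b:c:d)}\subset(\mathbb{P}^1)^4$ has either exactly two singular points or a curve of singular points. Then there exists $(c_0:c_1:c_2:c_3)\in\mathbb{P}^3$ with $c_0^2\neq c_2^2$ and $D_{12}D_{13}D_{14}\neq0$ (i.e. the four lines $L_1,L_2,L_3,L_4$ are pairwise disjoint) such that $(a:b:c:d)=(x^2-y^2:t^2-z^2:z^2+t^2:x^2+y^2)$, where $x=2(c_0c_3-c_1c_2)$, $y=c_0^2-c_1^2-c_2^2+c_3^2$, $z=2(c_0c_1-c_2c_3)$, $t=c_0^2+c_1^2-c_2^2-c_3^2$.
   Context: $(\mathbb{P}^1)^4$ has coordinates $((x_i:y_i))_{i=1}^4$ (here $x_i,y_i$ are the coordinates of $\mathbb{P}^1$, distinct from the auxiliary quantities $x,y,z,t$ in the claim); $X_{(a:b:c:d)}=\{G_{a,b,c,d}=0\}$ with $G_{a,b,c,d}=\tfrac{a+d}{2}(x_1x_2x_3x_4+y_1y_2y_3y_4)+\tfrac{a-d}{2}(x_1x_2y_3y_4+y_1y_2x_3x_4)+\tfrac{b+c}{2}(x_1y_2x_3y_4+y_1x_2y_3x_4)+\tfrac{b-c}{2}(x_1y_2y_3x_4+y_1x_2x_3y_4)$. For $(c_0:c_1:c_2:c_3)\in\mathbb{P}^3$ with $c_0^2\ne c_2^2$, $L_1\subset\mathbb{P}^3_{z_0,\dots,z_3}$ is the line through $(c_0:c_1:c_2:c_3)$ and $(c_2:c_3:c_0:c_1)$,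 $L_2=\tau_1(L_1)$, $L_3=\tau_2(L_2)$, $L_4=\tau_2(L_1)$ with $\tau_1(z_0:z_1:z_2:z_3)=(z_1:z_0:z_3:z_2)$, $\tau_2(z_0:z_1:z_2:z_3)=(z_0:-z_1:z_2:-z_3)$. Set $D_{12}=((c_0+c_1)^2-(c_2+c_3)^2)((c_0-c_1)^2-(c_2-c_3)^2)$, $D_{13}=((c_0-c_2)^2+(c_1-c_3)^2)((c_0+c_2)^2+(c_1+c_3)^2)$, $D_{14}=(c_0^2-c_2^2)(c_1^2-c_3^2)$; the lines $L_1,\dots,L_4$ are pairwise disjoint iff $D_{12}D_{13}D_{14}\neq0$. *)

theory Defs
  imports "HOL-Analysis.Analysis" "HOL-Library.Poly_Mapping"
begin

text \<open>A point of (P^1)^4 is given by a coordinate vector v :: nat => complex, where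
  x_i = v (2*(i-1)) and y_i = v (2*(i-1)+1) for i = 1..4; all other entries are 0.
  Each pair (x_i, y_i) must be nonzero.\<close>

definition valid4 :: "(nat \<Rightarrow> complex) \<Rightarrow> bool" where
  "valid4 v \<longleftrightarrow> (\<forall>k<4. (v (2*k), v (2*k+1)) \<noteq> (0,0)) \<and> (\<forall>i\<ge>8. v i = 0)"

definition pt4 :: "(nat \<Rightarrow> complex) \<Rightarrow> (nat \<Rightarrow> complex) set" where
  "pt4 v = {w. valid4 w \<and> (\<exists>l::nat \<Rightarrow> complex. \<forall>k<4. l k \<noteq> 0 \<and>
                 w (2*k) = l k * v (2*k) \<and> w (2*k+1) = l k * v (2*k+1))}"

definition PP4 :: "(nat \<Rightarrow> complex) set set" where
  "PP4 = pt4 ` {v. valid4 v}"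

text \<open>Polynomials in the 8 variables x_1,y_1,...,x_4,y_4 (variable indices 0..7).\<close>

type_synonym mono8 = "nat \<Rightarrow>\<^sub>0 nat"
type_synonym mpoly8 = "mono8 \<Rightarrow>\<^sub>0 complex"

definition mono_eval :: "mono8 \<Rightarrow> (nat \<Rightarrow> complex) \<Rightarrow> complex" where
  "mono_eval m v = (\<Prod>i\<in>Poly_Mapping.keys m. v i ^ Poly_Mapping.lookup m i)"

definition peval :: "mpoly8 \<Rightarrow> (nat \<Rightarrow> complex) \<Rightarrow> complex" where
  "peval p v = (\<Sum>m\<in>Poly_Mapping.keys p. Poly_Mapping.lookup p m * mono_eval m v)"

definition multihom :: "mpoly8 \<Rightarrow> bool" where
  "multihom p \<longleftrightarrow> (\<forall>m\<in>Poly_Mapping.keys p. \<forall>i\<in>Poly_Mapping.keys m. i < 8) \<and>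
     (\<exists>d::nat \<Rightarrow> nat. \<forall>m\<in>Poly_Mapping.keys p. \<forall>k<4. Poly_Mapping.lookup m (2*k) + Poly_Mapping.lookup m (2*k+1) = d k)"

definition zero_locus :: "mpoly8 set \<Rightarrow> (nat \<Rightarrow> complex) set set" where
  "zero_locus F = {p \<in> PP4. \<exists>v. valid4 v \<and> p = pt4 v \<and> (\<forall>f\<in>F. peval f v = 0)}"

definition zclosed :: "(nat \<Rightarrow> complex) set set \<Rightarrow> bool" where
  "zclosed S \<longleftrightarrow> (\<exists>F. (\<forall>f\<in>F. multihom f) \<and> S = zero_locus F)"

definition zirreducible :: "(nat \<Rightarrow> complex) set set \<Rightarrow> bool" where
  "zirreducible Z \<longleftrightarrow> zclosed Z \<and> Z \<noteq> {} \<and>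
     (\<forall>A B. zclosed A \<longrightarrow> zclosed B \<longrightarrow> Z \<subseteq> A \<union> B \<longrightarrow> Z \<subseteq> A \<or> Z \<subseteq> B)"

definition zdim_ge :: "(nat \<Rightarrow> complex) set set \<Rightarrow> nat \<Rightarrow> bool" where
  "zdim_ge S n \<longleftrightarrow> (\<exists>Z :: nat \<Rightarrow> (nat \<Rightarrow> complex) set set.
      (\<forall>i\<le>n. zirreducible (Z i) \<and> Z i \<subseteq> S) \<and> (\<forall>i<n. Z i \<subset> Z (Suc i)))"

definition is_curve :: "(nat \<Rightarrow> complex) set set \<Rightarrow> bool" where
  "is_curve S \<longleftrightarrow> zclosed S \<and> zdim_ge S 1 \<and> \<not> zdim_ge S 2"

definition Gabcd :: "complex \<Rightarrow> complex \<Rightarrow> complex \<Rightarrow> complex \<Rightarrow> (nat \<Rightarrow> complex) \<Rightarrow> complex" where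
  "Gabcd a b c d v =
     (let x1 = v 0; y1 = v 1; x2 = v 2; y2 = v 3; x3 = v 4; y3 = v 5; x4 = v 6; y4 = v 7 in
       (a + d) / 2 * (x1*x2*x3*x4 + y1*y2*y3*y4)
     + (a - d) / 2 * (x1*x2*y3*y4 + y1*y2*x3*x4)
     + (b + c) / 2 * (x1*y2*x3*y4 + y1*x2*y3*x4)
     + (b - c) / 2 * (x1*y2*y3*x4 + y1*x2*x3*y4))"

definition sing_locus :: "complex \<Rightarrow> complex \<Rightarrow> complex \<Rightarrow> complex \<Rightarrow> (nat \<Rightarrow> complex) set set" where
  "sing_locus a b c d = {p \<in> PP4. \<exists>v. valid4 v \<and> p = pt4 v \<and> Gabcd a b c d v = 0 \<and>
      (\<forall>i<8. deriv (\<lambda>s. Gabcd a b c d (v(i := s))) (v i) = 0)}"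

definition D12 :: "complex \<Rightarrow> complex \<Rightarrow> complex \<Rightarrow> complex \<Rightarrow> complex" where
  "D12 c0 c1 c2 c3 = ((c0 + c1)^2 - (c2 + c3)^2) * ((c0 - c1)^2 - (c2 - c3)^2)"

definition D13 :: "complex \<Rightarrow> complex \<Rightarrow> complex \<Rightarrow> complex \<Rightarrow> complex" where
  "D13 c0 c1 c2 c3 = ((c0 - c2)^2 + (c1 - c3)^2) * ((c0 + c2)^2 + (c1 + c3)^2)"

definition D14 :: "complex \<Rightarrow> complex \<Rightarrow> complex \<Rightarrow> complex \<Rightarrow> complex" where
  "D14 c0 c1 c2 c3 = (c0^2 - c2^2) * (c1^2 - c3^2)"

end

theory Submission
  imports Defs "HOL-Complex_Analysis.Conformal_Mappings"
begin

lemma all4: "(\<forall>k<(4::nat). P k) = (P 0 \<and> P 1 \<and> P 2 \<and> P 3)"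
  by (auto simp: numeral_eq_Suc less_Suc_eq)

lemma peval_superset:
  assumes "finite K" "Poly_Mapping.keys p \<subseteq> K"
  shows "peval p v = (\<Sum>m\<in>K. Poly_Mapping.lookup p m * mono_eval m v)"
  unfolding peval_def
  by (rule sum.mono_neutral_left[OF assms(1) assms(2)]) (auto simp: in_keys_iff)

lemma mono_eval_superset:
  assumes "finite K" "Poly_Mapping.keys m \<subseteq> K"
  shows "mono_eval m v = (\<Prod>i\<in>K. v i ^ Poly_Mapping.lookup m i)"
  unfolding mono_eval_def
  by (rule prod.mono_neutral_left[OF assms(1) assms(2)]) (auto simp: in_keys_iff)

lemma peval_add: "peval (p + q) v = peval p v + peval q v"
proof -
  let ?K = "Poly_Mapping.keys p \<union> Poly_Mapping.keys q"
  have "peval (p+q) v = (\<Sum>m\<in>?K. Poly_Mapping.lookup (p+q) m * mono_eval m v)"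
    by (rule peval_superset) (auto simp: keys_add)
  also have "\<dots> = (\<Sum>m\<in>?K. Poly_Mapping.lookup p m * mono_eval m v) + (\<Sum>m\<in>?K. Poly_Mapping.lookup q m * mono_eval m v)"
    by (simp add: lookup_add distrib_right sum.distrib)
  also have "\<dots> = peval p v + peval q v"
    by (simp add: peval_superset[symmetric])
  finally show ?thesis .
qed

lemma peval_single: "peval (Poly_Mapping.single m c) v = c * mono_eval m v"
  by (cases "c = 0") (simp_all add: peval_def)

lemma mono_eval_add: "mono_eval (m1 + m2) v = mono_eval m1 v * mono_eval m2 v"
proof -
  let ?K = "Poly_Mapping.keys m1 \<union> Poly_Mapping.keys m2"
  have "mono_eval (m1+m2) v = (\<Prod>i\<in>?K. v i ^ Poly_Mapping.lookup (m1+m2) i)"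
    by (rule mono_eval_superset) (auto simp: keys_add)
  also have "\<dots> = (\<Prod>i\<in>?K. v i ^ Poly_Mapping.lookup m1 i) * (\<Prod>i\<in>?K. v i ^ Poly_Mapping.lookup m2 i)"
    by (simp add: lookup_add power_add prod.distrib)
  also have "\<dots> = mono_eval m1 v * mono_eval m2 v"
    by (simp add: mono_eval_superset[symmetric])
  finally show ?thesis .
qed

lemma mono_eval_single: "mono_eval (Poly_Mapping.single i n) v = v i ^ n"
  by (cases "n = 0") (simp_all add: mono_eval_def)

definition lin :: "nat \<Rightarrow> complex \<Rightarrow> mpoly8" where
  "lin i c = Poly_Mapping.single (Poly_Mapping.single i 1) c"

definition quad :: "nat \<Rightarrow> nat \<Rightarrow> complex \<Rightarrow> mpoly8" where
  "quad i j c = Poly_Mapping.single (Poly_Mapping.single i 1 + Poly_Mapping.single j 1) c"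

lemma peval_lin[simp]: "peval (lin i c) v = c * v i"
  by (simp add: lin_def peval_single mono_eval_single)

lemma peval_quad[simp]: "peval (quad i j c) v = c * v i * v j"
  by (simp add: quad_def peval_single mono_eval_single mono_eval_add)

lemma multihomI:
  assumes "Poly_Mapping.keys p \<subseteq> M"
    and "\<And>m i. m \<in> M \<Longrightarrow> i \<in> Poly_Mapping.keys m \<Longrightarrow> i < 8"
    and "\<And>m k. m \<in> M \<Longrightarrow> k < 4 \<Longrightarrow> Poly_Mapping.lookup m (2*k) + Poly_Mapping.lookup m (2*k+1) = d k"
  shows "multihom p"
  unfolding multihom_def using assms by blast

lemma keys_lin: "Poly_Mapping.keys (lin i c) \<subseteq> {Poly_Mapping.single i 1}"
  by (simp add: lin_def)
lemma keys_quad: "Poly_Mapping.keys (quad i j c) \<subseteq> {Poly_Mapping.single i 1 + Poly_Mapping.single j 1}"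
  by (simp add: quad_def)

lemma multihom_lin2:
  assumes "k < 4"
  shows "multihom (lin (2*k) c1 + lin (2*k+1) c2)"
proof (rule multihomI[where M="{Poly_Mapping.single (2*k) 1, Poly_Mapping.single (2*k+1) 1}"
      and d="\<lambda>k'. if k' = k then 1 else 0"])
  show "Poly_Mapping.keys (lin (2*k) c1 + lin (2*k+1) c2) \<subseteq> {Poly_Mapping.single (2*k) 1, Poly_Mapping.single (2*k+1) 1}"
    using keys_add[of "lin (2*k) c1" "lin (2*k+1) c2"] keys_lin[of "2*k" c1] keys_lin[of "2*k+1" c2] by auto
qed (use assms in \<open>auto simp: lookup_single when_def\<close>)

lemma multihom_lin1:
  assumes "k < 4"
  shows "multihom (lin (2*k) c)" "multihom (lin (2*k+1) c)"
proof -
  have "lin (2*k) c = lin (2*k) c + lin (2*k+1) 0" by (simp add: lin_def)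
  then show "multihom (lin (2*k) c)" using multihom_lin2[OF assms] by metis
  have "lin (2*k+1) c = lin (2*k) 0 + lin (2*k+1) c" by (simp add: lin_def)
  then show "multihom (lin (2*k+1) c)" using multihom_lin2[OF assms] by metis
qed

lemma keys_mon2: "n \<in> Poly_Mapping.keys (Poly_Mapping.single i (1::nat) + Poly_Mapping.single j 1) \<Longrightarrow> n = i \<or> n = j"
  using keys_add[of "Poly_Mapping.single i (1::nat)" "Poly_Mapping.single j 1"] by auto

lemma pd_single: "Poly_Mapping.lookup (Poly_Mapping.single (i::nat) (1::nat)) (2*n) + Poly_Mapping.lookup (Poly_Mapping.single i 1) (2*n+1) = (if i div 2 = n then 1 else 0)"
  by (auto simp: lookup_single when_def)

lemma keys_quad_mem: "m \<in> Poly_Mapping.keys (quad i j c) \<Longrightarrow> m = Poly_Mapping.single i 1 + Poly_Mapping.single j 1"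
  using keys_quad by blast

lemma multihom_quad2:
  assumes "i < 8" "j < 8" "k < 8" "l < 8"
    and "(k div 2 = i div 2 \<and> l div 2 = j div 2) \<or> (k div 2 = j div 2 \<and> l div 2 = i div 2)"
  shows "multihom (quad i j c1 + quad k l c2)"
proof (rule multihomI[where M="Poly_Mapping.keys (quad i j c1) \<union> Poly_Mapping.keys (quad k l c2)"
      and d="\<lambda>n. (if i div 2 = n then 1 else 0) + (if j div 2 = n then 1 else 0)"])
  show "Poly_Mapping.keys (quad i j c1 + quad k l c2) \<subseteq> Poly_Mapping.keys (quad i j c1) \<union> Poly_Mapping.keys (quad k l c2)"
    by (rule keys_add)
next
  fix m n assume m: "m \<in> Poly_Mapping.keys (quad i j c1) \<union> Poly_Mapping.keys (quad k l c2)" and n: "n \<in> Poly_Mapping.keys m"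
  from m have "m = Poly_Mapping.single i 1 + Poly_Mapping.single j 1 \<or> m = Poly_Mapping.single k 1 + Poly_Mapping.single l 1"
    using keys_quad_mem by blast
  then have "n = i \<or> n = j \<or> n = k \<or> n = l"
  proof
    assume "m = Poly_Mapping.single i 1 + Poly_Mapping.single j 1"
    then show ?thesis using keys_mon2[of n i j] n by auto
  next
    assume "m = Poly_Mapping.single k 1 + Poly_Mapping.single l 1"
    then show ?thesis using keys_mon2[of n k l] n by auto
  qed
  then show "n < 8" using assms(1-4) by auto
next
  fix m n assume "m \<in> Poly_Mapping.keys (quad i j c1) \<union> Poly_Mapping.keys (quad k l c2)"
  then have "m = Poly_Mapping.single i 1 + Poly_Mapping.single j 1 \<or> m = Poly_Mapping.single k 1 + Poly_Mapping.single l 1"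
    using keys_quad_mem by blast
  then show "Poly_Mapping.lookup m (2*n) + Poly_Mapping.lookup m (2*n+1) = (if i div 2 = n then 1 else 0) + (if j div 2 = n then 1 else 0)"
  proof
    assume "m = Poly_Mapping.single i 1 + Poly_Mapping.single j 1"
    then show ?thesis using pd_single[of i n] pd_single[of j n] by (simp only: lookup_add)
  next
    assume "m = Poly_Mapping.single k 1 + Poly_Mapping.single l 1"
    then have "Poly_Mapping.lookup m (2*n) + Poly_Mapping.lookup m (2*n+1) = (if k div 2 = n then 1 else 0) + (if l div 2 = n then 1 else 0)"
      using pd_single[of k n] pd_single[of l n] by (simp only: lookup_add)
    then show ?thesis using assms(5) by (elim disjE) (simp_all add: add.commute)
  qed
qed

lemma valid4_in_pt4: "valid4 v \<Longrightarrow> v \<in> pt4 v"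
  unfolding pt4_def by (auto intro!: exI[of _ "\<lambda>_. 1"])

lemma pt4_in_PP4: "valid4 v \<Longrightarrow> pt4 v \<in> PP4"
  by (simp add: PP4_def)

lemma pt4_subset_scale:
  assumes "\<forall>k<4. l k \<noteq> 0 \<and> w (2*k) = l k * v (2*k) \<and> w (2*k+1) = l k * v (2*k+1)"
  shows "pt4 w \<subseteq> pt4 v"
proof
  fix u assume "u \<in> pt4 w"
  then obtain l' where u: "valid4 u" "\<forall>k<4. l' k \<noteq> 0 \<and> u (2*k) = l' k * w (2*k) \<and> u (2*k+1) = l' k * w (2*k+1)"
    unfolding pt4_def by auto
  show "u \<in> pt4 v" unfolding pt4_def
    using u assms by (auto intro!: exI[of _ "\<lambda>k. l' k * l k"])
qed

lemma pt4_eq_scale: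
  assumes "\<forall>k<4. l k \<noteq> 0 \<and> w (2*k) = l k * v (2*k) \<and> w (2*k+1) = l k * v (2*k+1)"
  shows "pt4 w = pt4 v"
proof
  show "pt4 w \<subseteq> pt4 v" by (rule pt4_subset_scale[OF assms])
  have "\<forall>k<4. inverse (l k) \<noteq> 0 \<and> v (2*k) = inverse (l k) * w (2*k) \<and> v (2*k+1) = inverse (l k) * w (2*k+1)"
    using assms by (auto simp: field_simps)
  then show "pt4 v \<subseteq> pt4 w" by (rule pt4_subset_scale)
qed

lemma pair_scale:
  assumes "(v0, v1) \<noteq> (0::complex, 0)" "(w0, w1) \<noteq> (0, 0)" "v0 * w1 = v1 * w0"
  shows "\<exists>l. l \<noteq> 0 \<and> w0 = l * v0 \<and> w1 = l * v1"
proof (cases "v0 = 0")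
  case True
  then have "v1 \<noteq> 0" using assms by auto
  then show ?thesis using assms True by (auto intro!: exI[of _ "w1 / v1"] simp: field_simps)
next
  case False
  then show ?thesis using assms by (auto intro!: exI[of _ "w0 / v0"] simp: field_simps)
qed

lemma pt4_eqI:
  assumes "valid4 v" "valid4 w" "\<forall>k<4. v (2*k) * w (2*k+1) = v (2*k+1) * w (2*k)"
  shows "pt4 w = pt4 v"
proof -
  have "\<forall>k. \<exists>l. k < 4 \<longrightarrow> l \<noteq> 0 \<and> w (2*k) = l * v (2*k) \<and> w (2*k+1) = l * v (2*k+1)"
  proof
    fix k
    show "\<exists>l. k < 4 \<longrightarrow> l \<noteq> 0 \<and> w (2*k) = l * v (2*k) \<and> w (2*k+1) = l * v (2*k+1)"
    proof (cases "k < 4")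
      case True
      have "(v (2*k), v (2*k+1)) \<noteq> (0,0)" "(w (2*k), w (2*k+1)) \<noteq> (0,0)"
        using assms(1,2) True unfolding valid4_def by auto
      then show ?thesis using pair_scale[of "v (2*k)" "v (2*k+1)" "w (2*k)" "w (2*k+1)"] assms(3) True by auto
    qed simp
  qed
  then obtain l where "\<forall>k<4. l k \<noteq> 0 \<and> w (2*k) = l k * v (2*k) \<and> w (2*k+1) = l k * v (2*k+1)"
    using choice[of "\<lambda>k l. k < 4 \<longrightarrow> l \<noteq> 0 \<and> w (2*k) = l * v (2*k) \<and> w (2*k+1) = l * v (2*k+1)"] by blast
  then show ?thesis by (rule pt4_eq_scale)
qed

lemma pt4_eqD:
  assumes "valid4 v" "pt4 v = pt4 w"
  shows "\<exists>l. \<forall>k<4. l k \<noteq> 0 \<and> v (2*k) = l k * w (2*k) \<and> v (2*k+1) = l k * w (2*k+1)"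
proof -
  have "v \<in> pt4 w" using valid4_in_pt4[OF assms(1)] assms(2) by simp
  then show ?thesis unfolding pt4_def by auto
qed

lemma pt4_eq_prop:
  assumes "valid4 v" "pt4 v = pt4 w" "k < 4"
  shows "v (2*k) * w (2*k+1) = v (2*k+1) * w (2*k)"
  using pt4_eqD[OF assms(1,2)] assms(3) by (auto simp: algebra_simps)

lemma prod8: "(\<Prod>i<(8::nat). f i) = f 0 * f 1 * f 2 * f 3 * f 4 * f 5 * f 6 * (f 7::complex)"
  by (simp add: eval_nat_numeral)
lemma prod4: "(\<Prod>i<(4::nat). f i) = f 0 * f 1 * f 2 * (f 3::complex)"
  by (simp add: eval_nat_numeral)

lemma peval_scale:
  assumes "multihom f" "\<forall>i<8. v i = l (i div 2) * w i"
  shows "\<exists>c. peval f v = c * peval f w"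
proof -
  obtain d where d1: "\<forall>m\<in>Poly_Mapping.keys f. \<forall>i\<in>Poly_Mapping.keys m. i < 8"
    and d2: "\<forall>m\<in>Poly_Mapping.keys f. \<forall>k<4. Poly_Mapping.lookup m (2*k) + Poly_Mapping.lookup m (2*k+1) = d k"
    using assms(1) unfolding multihom_def by blast
  let ?c = "\<Prod>k<4. l k ^ d k"
  have me: "mono_eval m v = ?c * mono_eval m w" if m: "m \<in> Poly_Mapping.keys f" for m
  proof -
    have ks: "Poly_Mapping.keys m \<subseteq> {..<8}" using d1 m by auto
    have "mono_eval m v = (\<Prod>i<8. v i ^ Poly_Mapping.lookup m i)"
      by (rule mono_eval_superset[OF _ ks]) simp
    also have "\<dots> = (\<Prod>i<8. l (i div 2) ^ Poly_Mapping.lookup m i) * (\<Prod>i<8. w i ^ Poly_Mapping.lookup m i)"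
      using assms(2) by (simp add: power_mult_distrib prod.distrib[symmetric])
    also have "(\<Prod>i<8. w i ^ Poly_Mapping.lookup m i) = mono_eval m w"
      by (rule mono_eval_superset[OF _ ks, symmetric]) simp
    also have "(\<Prod>i<8. l (i div 2) ^ Poly_Mapping.lookup m i) = ?c"
    proof -
      have "\<forall>k<4. Poly_Mapping.lookup m (2*k) + Poly_Mapping.lookup m (2*k+1) = d k" using d2 m by blast
      then have e: "Poly_Mapping.lookup m 0 + Poly_Mapping.lookup m 1 = d 0"
        "Poly_Mapping.lookup m 2 + Poly_Mapping.lookup m 3 = d 1"
        "Poly_Mapping.lookup m 4 + Poly_Mapping.lookup m 5 = d 2"
        "Poly_Mapping.lookup m 6 + Poly_Mapping.lookup m 7 = d 3"
        unfolding all4 by simp_all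
      show ?thesis unfolding prod8 prod4 e[symmetric] power_add by (simp add: mult_ac)
    qed
    finally show ?thesis by simp
  qed
  have "peval f v = (\<Sum>m\<in>Poly_Mapping.keys f. Poly_Mapping.lookup f m * (?c * mono_eval m w))"
    unfolding peval_def by (rule sum.cong) (auto simp: me)
  also have "\<dots> = ?c * peval f w"
    unfolding peval_def by (simp add: sum_distrib_right mult_ac)
  finally show ?thesis by blast
qed

lemma peval_pt4_zero:
  assumes "multihom f" "valid4 v" "valid4 w" "pt4 v = pt4 w" "peval f w = 0"
  shows "peval f v = 0"
proof -
  obtain l where l: "\<forall>k<4. l k \<noteq> 0 \<and> v (2*k) = l k * w (2*k) \<and> v (2*k+1) = l k * w (2*k+1)"
    using pt4_eqD[OF assms(2,4)] by blast
  have vw: "\<forall>i<8. v i = l (i div 2) * w i"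
  proof (intro allI impI)
    fix i :: nat assume "i < 8"
    define j where "j = i div 2"
    have j4: "j < 4" using \<open>i < 8\<close> unfolding j_def by auto
    have h: "v (2*j) = l j * w (2*j) \<and> v (2*j+1) = l j * w (2*j+1)"
      using l j4 by blast
    have "i = 2*j \<or> i = 2*j+1" unfolding j_def by presburger
    then show "v i = l (i div 2) * w i" using h unfolding j_def[symmetric] by (elim disjE) simp_all
  qed
  obtain c where "peval f v = c * peval f w" using peval_scale[OF assms(1) vw] by blast
  then show ?thesis using assms(5) by simp
qed

lemma zero_locus_iff:
  assumes "\<forall>f\<in>F. multihom f" "valid4 u"
  shows "pt4 u \<in> zero_locus F \<longleftrightarrow> (\<forall>f\<in>F. peval f u = 0)"
proof
  assume "pt4 u \<in> zero_locus F"
  then obtain v where v: "valid4 v" "pt4 u = pt4 v" "\<forall>f\<in>F. peval f v = 0"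
    unfolding zero_locus_def by blast
  show "\<forall>f\<in>F. peval f u = 0"
  proof
    fix f assume f: "f \<in> F"
    show "peval f u = 0"
      by (rule peval_pt4_zero[OF _ assms(2) v(1) v(2)]) (use f assms(1) v(3) in auto)
  qed
next
  assume "\<forall>f\<in>F. peval f u = 0"
  then show "pt4 u \<in> zero_locus F" unfolding zero_locus_def using assms(2) pt4_in_PP4[OF assms(2)] by auto
qed

lemma zero_locus_memE:
  assumes "p \<in> zero_locus F"
  obtains u where "valid4 u" "p = pt4 u" "\<forall>f\<in>F. peval f u = 0"
  using assms unfolding zero_locus_def by blast

lemma valid4_pair: "valid4 v \<Longrightarrow> k < 4 \<Longrightarrow> (v (2*k), v (2*k+1)) \<noteq> (0,0)"
  unfolding valid4_def by blast

lemma zclosedE: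
  assumes "zclosed Z"
  obtains F where "\<forall>f\<in>F. multihom f" "Z = zero_locus F"
  using assms unfolding zclosed_def by blast

lemma zclosed_I: "\<forall>f\<in>F. multihom f \<Longrightarrow> zclosed (zero_locus F)"
  unfolding zclosed_def by blast

lemma grid_not_dim1:
  assumes S: "\<forall>p\<in>S. \<exists>v. valid4 v \<and> p = pt4 v \<and> (\<forall>k<4. v (2*k+1) = v (2*k) \<or> v (2*k+1) = - v (2*k))"
  shows "\<not> zdim_ge S 1"
proof
  assume "zdim_ge S 1"
  then obtain Z where Z1: "\<forall>i\<le>1. zirreducible (Z i) \<and> Z i \<subseteq> S" and Z2: "\<forall>i<1. Z i \<subset> Z (Suc i)"
    unfolding zdim_ge_def by blast
  have irr0: "zirreducible (Z 0)" using Z1 by simp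
  have irr1: "zirreducible (Z 1)" and sub1: "Z 1 \<subseteq> S" using Z1 by simp_all
  have Z01: "Z 0 \<subset> Z 1" using Z2 by simp
  have "Z 0 \<noteq> {}" using irr0 unfolding zirreducible_def by simp
  then obtain p where p: "p \<in> Z 0" by blast
  obtain q where q: "q \<in> Z 1" "q \<notin> Z 0" using Z01 psubset_imp_ex_mem by blast
  have pZ: "p \<in> Z 1" using p Z01 by blast
  have pq: "p \<noteq> q" using p q by blast
  have "p \<in> S" using pZ sub1 by blast
  then obtain v where v: "valid4 v" "p = pt4 v" "\<forall>k<4. v (2*k+1) = v (2*k) \<or> v (2*k+1) = - v (2*k)"
    using S by blast
  have "q \<in> S" using q(1) sub1 by blast
  then obtain w where w: "valid4 w" "q = pt4 w" "\<forall>k<4. w (2*k+1) = w (2*k) \<or> w (2*k+1) = - w (2*k)"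
    using S by blast
  have "\<exists>k<4. v (2*k) * w (2*k+1) \<noteq> v (2*k+1) * w (2*k)"
  proof (rule ccontr)
    assume "\<not> ?thesis"
    then have "\<forall>k<4. v (2*k) * w (2*k+1) = v (2*k+1) * w (2*k)" by blast
    then have "pt4 w = pt4 v" using pt4_eqI[OF v(1) w(1)] by blast
    then show False using pq v(2) w(2) by simp
  qed
  then obtain k where k: "k < 4" "v (2*k) * w (2*k+1) \<noteq> v (2*k+1) * w (2*k)" by blast
  obtain \<sigma> :: complex where sg: "\<sigma> = 1 \<or> \<sigma> = -1" "v (2*k+1) = \<sigma> * v (2*k)" "w (2*k+1) = - \<sigma> * w (2*k)"
  proof (cases "v (2*k+1) = v (2*k)")
    case True
    have "w (2*k+1) = w (2*k) \<or> w (2*k+1) = - w (2*k)" using w(3) k(1) by blast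
    then have "w (2*k+1) = - w (2*k)" using k(2) True by auto
    then show ?thesis using that[of 1] True by simp
  next
    case False
    then have "v (2*k+1) = - v (2*k)" using v(3) k(1) by blast
    moreover have "w (2*k+1) = w (2*k) \<or> w (2*k+1) = - w (2*k)" using w(3) k(1) by blast
    ultimately have "w (2*k+1) = w (2*k)" using k(2) by auto
    moreover note \<open>v (2*k+1) = - v (2*k)\<close>
    ultimately show ?thesis using that[of "-1"] by simp
  qed
  have vk: "v (2*k) \<noteq> 0" using valid4_pair[OF v(1) k(1)] sg(2) by auto
  have wk: "w (2*k) \<noteq> 0" using valid4_pair[OF w(1) k(1)] sg(3) by auto
  obtain F1 where F1: "\<forall>f\<in>F1. multihom f" "Z 1 = zero_locus F1"
  proof -
    have "zclosed (Z 1)" using irr1 unfolding zirreducible_def by simp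
    then show ?thesis using that unfolding zclosed_def by blast
  qed
  define Lp where "Lp = lin (2*k) (-\<sigma>) + lin (2*k+1) 1"
  define Lm where "Lm = lin (2*k) \<sigma> + lin (2*k+1) 1"
  have mLp: "multihom Lp" "multihom Lm" unfolding Lp_def Lm_def using multihom_lin2[OF k(1)] by auto
  have FA: "\<forall>f\<in>F1 \<union> {Lp}. multihom f" and FB: "\<forall>f\<in>F1 \<union> {Lm}. multihom f" using F1(1) mLp by auto
  have cover: "Z 1 \<subseteq> zero_locus (F1 \<union> {Lp}) \<union> zero_locus (F1 \<union> {Lm})"
  proof
    fix r assume r: "r \<in> Z 1"
    then obtain u where u: "valid4 u" "r = pt4 u" "\<forall>k<4. u (2*k+1) = u (2*k) \<or> u (2*k+1) = - u (2*k)"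
      using S sub1 by blast
    have "pt4 u \<in> zero_locus F1" using r u(2) F1(2) by simp
    then have uF: "\<forall>f\<in>F1. peval f u = 0" using zero_locus_iff[OF F1(1) u(1)] by blast
    have uk: "u (2*k+1) = u (2*k) \<or> u (2*k+1) = - u (2*k)" using u(3) k(1) by blast
    have "peval Lp u = 0 \<or> peval Lm u = 0"
      using uk sg(1) unfolding Lp_def Lm_def peval_add peval_lin by auto
    then show "r \<in> zero_locus (F1 \<union> {Lp}) \<union> zero_locus (F1 \<union> {Lm})"
    proof
      assume "peval Lp u = 0"
      then have "\<forall>f\<in>F1 \<union> {Lp}. peval f u = 0" using uF by blast
      then have "pt4 u \<in> zero_locus (F1 \<union> {Lp})" using zero_locus_iff[OF FA u(1)] by blast
      then show ?thesis using u(2) by blast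
    next
      assume "peval Lm u = 0"
      then have "\<forall>f\<in>F1 \<union> {Lm}. peval f u = 0" using uF by blast
      then have "pt4 u \<in> zero_locus (F1 \<union> {Lm})" using zero_locus_iff[OF FB u(1)] by blast
      then show ?thesis using u(2) by blast
    qed
  qed
  have nA: "q \<notin> zero_locus (F1 \<union> {Lp})"
  proof
    assume "q \<in> zero_locus (F1 \<union> {Lp})"
    then have "\<forall>f\<in>F1 \<union> {Lp}. peval f w = 0" using zero_locus_iff[OF FA w(1)] w(2) by blast
    then have "peval Lp w = 0" by blast
    then have "-2 * \<sigma> * w (2*k) = 0" unfolding Lp_def peval_add peval_lin using sg(3) by (simp add: algebra_simps)
    then show False using wk sg(1) by auto
  qed
  have nB: "p \<notin> zero_locus (F1 \<union> {Lm})"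
  proof
    assume "p \<in> zero_locus (F1 \<union> {Lm})"
    then have "\<forall>f\<in>F1 \<union> {Lm}. peval f v = 0" using zero_locus_iff[OF FB v(1)] v(2) by blast
    then have "peval Lm v = 0" by blast
    then have "2 * \<sigma> * v (2*k) = 0" unfolding Lm_def peval_add peval_lin using sg(2) by (simp add: algebra_simps)
    then show False using vk sg(1) by auto
  qed
  have ZA: "zclosed (zero_locus (F1 \<union> {Lp}))" by (rule zclosed_I[OF FA])
  have ZB: "zclosed (zero_locus (F1 \<union> {Lm}))" by (rule zclosed_I[OF FB])
  have "\<forall>A B. zclosed A \<longrightarrow> zclosed B \<longrightarrow> Z 1 \<subseteq> A \<union> B \<longrightarrow> Z 1 \<subseteq> A \<or> Z 1 \<subseteq> B"
    using irr1 unfolding zirreducible_def by simp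
  then have "Z 1 \<subseteq> zero_locus (F1 \<union> {Lp}) \<or> Z 1 \<subseteq> zero_locus (F1 \<union> {Lm})"
    using ZA ZB cover by blast
  then show False
  proof
    assume "Z 1 \<subseteq> zero_locus (F1 \<union> {Lp})"
    then show False using q(1) nA by blast
  next
    assume "Z 1 \<subseteq> zero_locus (F1 \<union> {Lm})"
    then show False using pZ nB by blast
  qed
qed

definition dG :: "complex \<Rightarrow> complex \<Rightarrow> complex \<Rightarrow> complex \<Rightarrow> (nat \<Rightarrow> complex) \<Rightarrow> nat \<Rightarrow> complex" where
  "dG a b c d v i =
     (let x1 = v 0; y1 = v 1; x2 = v 2; y2 = v 3; x3 = v 4; y3 = v 5; x4 = v 6; y4 = v 7 in
      if i = 0 then (a+d)/2*x2*x3*x4 + (a-d)/2*x2*y3*y4 + (b+c)/2*y2*x3*y4 + (b-c)/2*y2*y3*x4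
      else if i = 1 then (a+d)/2*y2*y3*y4 + (a-d)/2*y2*x3*x4 + (b+c)/2*x2*y3*x4 + (b-c)/2*x2*x3*y4
      else if i = 2 then (a+d)/2*x1*x3*x4 + (a-d)/2*x1*y3*y4 + (b+c)/2*y1*y3*x4 + (b-c)/2*y1*x3*y4
      else if i = 3 then (a+d)/2*y1*y3*y4 + (a-d)/2*y1*x3*x4 + (b+c)/2*x1*x3*y4 + (b-c)/2*x1*y3*x4
      else if i = 4 then (a+d)/2*x1*x2*x4 + (a-d)/2*y1*y2*x4 + (b+c)/2*x1*y2*y4 + (b-c)/2*y1*x2*y4
      else if i = 5 then (a+d)/2*y1*y2*y4 + (a-d)/2*x1*x2*y4 + (b+c)/2*y1*x2*x4 + (b-c)/2*x1*y2*x4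
      else if i = 6 then (a+d)/2*x1*x2*x3 + (a-d)/2*y1*y2*x3 + (b+c)/2*y1*x2*y3 + (b-c)/2*x1*y2*y3
      else (a+d)/2*y1*y2*y3 + (a-d)/2*x1*x2*y3 + (b+c)/2*x1*y2*x3 + (b-c)/2*y1*x2*x3)"

lemma deriv_affine: "deriv (\<lambda>s. K + s * D) x = (D::complex)"
  by (rule DERIV_imp_deriv) (auto intro!: derivative_eq_intros)

lemma G_affine0: "(\<lambda>s. Gabcd a b c d (v(0 := s))) = (\<lambda>s. Gabcd a b c d (v(0 := 0)) + s * dG a b c d v 0)"
  by (rule ext) (simp add: Gabcd_def dG_def Let_def algebra_simps)

lemma G_affine1: "(\<lambda>s. Gabcd a b c d (v(1 := s))) = (\<lambda>s. Gabcd a b c d (v(1 := 0)) + s * dG a b c d v 1)"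
  by (rule ext) (simp add: Gabcd_def dG_def Let_def algebra_simps)

lemma G_affine2: "(\<lambda>s. Gabcd a b c d (v(2 := s))) = (\<lambda>s. Gabcd a b c d (v(2 := 0)) + s * dG a b c d v 2)"
  by (rule ext) (simp add: Gabcd_def dG_def Let_def algebra_simps)

lemma G_affine3: "(\<lambda>s. Gabcd a b c d (v(3 := s))) = (\<lambda>s. Gabcd a b c d (v(3 := 0)) + s * dG a b c d v 3)"
  by (rule ext) (simp add: Gabcd_def dG_def Let_def algebra_simps)

lemma G_affine4: "(\<lambda>s. Gabcd a b c d (v(4 := s))) = (\<lambda>s. Gabcd a b c d (v(4 := 0)) + s * dG a b c d v 4)"
  by (rule ext) (simp add: Gabcd_def dG_def Let_def algebra_simps)

lemma G_affine5: "(\<lambda>s. Gabcd a b c d (v(5 := s))) = (\<lambda>s. Gabcd a b c d (v(5 := 0)) + s * dG a b c d v 5)"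
  by (rule ext) (simp add: Gabcd_def dG_def Let_def algebra_simps)

lemma G_affine6: "(\<lambda>s. Gabcd a b c d (v(6 := s))) = (\<lambda>s. Gabcd a b c d (v(6 := 0)) + s * dG a b c d v 6)"
  by (rule ext) (simp add: Gabcd_def dG_def Let_def algebra_simps)

lemma G_affine7: "(\<lambda>s. Gabcd a b c d (v(7 := s))) = (\<lambda>s. Gabcd a b c d (v(7 := 0)) + s * dG a b c d v 7)"
  by (rule ext) (simp add: Gabcd_def dG_def Let_def algebra_simps)

lemma less8: "k < (8::nat) \<Longrightarrow> k = 0 \<or> k = 1 \<or> k = 2 \<or> k = 3 \<or> k = 4 \<or> k = 5 \<or> k = 6 \<or> k = 7"
  by (simp add: eval_nat_numeral less_Suc_eq)
lemma all8: "(\<forall>k<(8::nat). P k) = (P 0 \<and> P 1 \<and> P 2 \<and> P 3 \<and> P 4 \<and> P 5 \<and> P 6 \<and> P 7)"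
proof
  assume "\<forall>k<(8::nat). P k" then show "P 0 \<and> P 1 \<and> P 2 \<and> P 3 \<and> P 4 \<and> P 5 \<and> P 6 \<and> P 7" by simp
next
  assume h: "P 0 \<and> P 1 \<and> P 2 \<and> P 3 \<and> P 4 \<and> P 5 \<and> P 6 \<and> P 7"
  show "\<forall>k<(8::nat). P k"
  proof (intro allI impI)
    fix k :: nat assume "k < 8"
    then have "k = 0 \<or> k = 1 \<or> k = 2 \<or> k = 3 \<or> k = 4 \<or> k = 5 \<or> k = 6 \<or> k = 7" by (rule less8)
    then show "P k" using h by (elim disjE) simp_all
  qed
qed

lemma deriv_G_all: "(\<forall>i<8. deriv (\<lambda>s. Gabcd a b c d (v(i := s))) (v i) = 0) \<longleftrightarrow> (\<forall>i<8. dG a b c d v i = 0)"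
  unfolding all8 by (simp only: G_affine0 G_affine1 G_affine2 G_affine3 G_affine4 G_affine5 G_affine6 G_affine7 deriv_affine)

lemma sing_memE:
  assumes "p \<in> sing_locus a b c d"
  obtains v where "valid4 v" "p = pt4 v" "Gabcd a b c d v = 0" "\<forall>i<8. dG a b c d v i = 0"
  using assms unfolding sing_locus_def deriv_G_all by blast

lemma sing_memI:
  assumes "valid4 v" "Gabcd a b c d v = 0" "\<forall>i<8. dG a b c d v i = 0"
  shows "pt4 v \<in> sing_locus a b c d"
  using assms pt4_in_PP4[OF assms(1)] unfolding sing_locus_def deriv_G_all by blast

definition qA :: "complex \<Rightarrow> complex \<Rightarrow> complex \<Rightarrow> complex \<Rightarrow> complex" where "qA x1 y1 x2 y2 = x1*x2 + y1*y2"
definition qB :: "complex \<Rightarrow> complex \<Rightarrow> complex \<Rightarrow> complex \<Rightarrow> complex" where "qB x1 y1 x2 y2 = x1*y2 + y1*x2"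
definition qC :: "complex \<Rightarrow> complex \<Rightarrow> complex \<Rightarrow> complex \<Rightarrow> complex" where "qC x1 y1 x2 y2 = x1*y2 - y1*x2"
definition qD :: "complex \<Rightarrow> complex \<Rightarrow> complex \<Rightarrow> complex \<Rightarrow> complex" where "qD x1 y1 x2 y2 = x1*x2 - y1*y2"

lemma rank1:
  fixes x1 y1 x2 y2 P R S1 S2 :: complex
  assumes "(x1, y1) \<noteq> (0, 0)" "(x2, y2) \<noteq> (0, 0)"
    "P*x2 + S1*y2 = 0" "S2*x2 + R*y2 = 0" "P*x1 + S2*y1 = 0" "S1*x1 + R*y1 = 0"
  shows "\<exists>\<alpha>. P = \<alpha>*y1*y2 \<and> S1 = -\<alpha>*y1*x2 \<and> S2 = -\<alpha>*x1*y2 \<and> R = \<alpha>*x1*x2"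
proof -
  have n: "P*x2 = -(S1*y2)" "S2*x2 = -(R*y2)" "P*x1 = -(S2*y1)" "S1*x1 = -(R*y1)"
    using assms(3-6) by (simp_all add: eq_neg_iff_add_eq_0)
  show ?thesis
proof (cases "x1 = 0")
  case x1: True
  then have y1: "y1 \<noteq> 0" using assms(1) by auto
  show ?thesis
  proof (cases "x2 = 0")
    case True
    then have y2: "y2 \<noteq> 0" using assms(2) by auto
    show ?thesis using x1 y1 True y2 n
      by (intro exI[of _ "P/(y1*y2)"]) (auto simp: field_simps)
  next
    case False
    have e: "P*x2 = -(S1*y2)" using assms(3) by (simp add: eq_neg_iff_add_eq_0)
    show ?thesis using x1 y1 False n e
      by (intro exI[of _ "-S1/(y1*x2)"]) (auto simp: field_simps)
  qed
next
  case x1: False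
  show ?thesis
  proof (cases "x2 = 0")
    case True
    then have y2: "y2 \<noteq> 0" using assms(2) by auto
    show ?thesis using x1 True y2 n
      by (intro exI[of _ "-S2/(x1*y2)"]) (auto simp: field_simps)
  next
    case False
    have "P = R*y1*y2/(x1*x2)"
    proof -
      have "P*x1*x2 = -(S2*y1)*x2" using n(3) by simp
      also have "\<dots> = -(S2*x2)*y1" by (simp add: algebra_simps)
      also have "\<dots> = R*y1*y2" using n(2) by simp
      finally show ?thesis using x1 False by (simp add: field_simps)
    qed
    then show ?thesis using x1 False n
      by (intro exI[of _ "R/(x1*x2)"]) (auto simp: field_simps)
  qed
qed
qed

lemma valid4_pairs:
  assumes "valid4 v"
  shows "(v 0, v 1) \<noteq> (0,0)" "(v 2, v 3) \<noteq> (0,0)" "(v 4, v 5) \<noteq> (0,0)" "(v 6, v 7) \<noteq> (0,0)"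
  using assms unfolding valid4_def all4 by simp_all

lemma alpha_gen:
  fixes x1 y1 x2 y2 x3 y3 x4 y4 a b c d :: complex
  assumes "(x1, y1) \<noteq> (0, 0)" "(x2, y2) \<noteq> (0, 0)"
    and "(a+d)/2*x2*x3*x4 + (a-d)/2*x2*y3*y4 + (b+c)/2*y2*x3*y4 + (b-c)/2*y2*y3*x4 = 0"
    and "(a+d)/2*y2*y3*y4 + (a-d)/2*y2*x3*x4 + (b+c)/2*x2*y3*x4 + (b-c)/2*x2*x3*y4 = 0"
    and "(a+d)/2*x1*x3*x4 + (a-d)/2*x1*y3*y4 + (b+c)/2*y1*y3*x4 + (b-c)/2*y1*x3*y4 = 0"
    and "(a+d)/2*y1*y3*y4 + (a-d)/2*y1*x3*x4 + (b+c)/2*x1*x3*y4 + (b-c)/2*x1*y3*x4 = 0"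
  shows "\<exists>\<alpha>. a * qA x3 y3 x4 y4 = \<alpha> * qA x1 y1 x2 y2 \<and> b * qB x3 y3 x4 y4 = -\<alpha> * qB x1 y1 x2 y2 \<and>
              c * qC x3 y3 x4 y4 = \<alpha> * qC x1 y1 x2 y2 \<and> d * qD x3 y3 x4 y4 = -\<alpha> * qD x1 y1 x2 y2"
proof -
  define P where "P = a * qA x3 y3 x4 y4 + d * qD x3 y3 x4 y4"
  define R where "R = a * qA x3 y3 x4 y4 - d * qD x3 y3 x4 y4"
  define S1 where "S1 = b * qB x3 y3 x4 y4 + c * qC x3 y3 x4 y4"
  define S2 where "S2 = b * qB x3 y3 x4 y4 - c * qC x3 y3 x4 y4"
  have e3: "P*x2 + S1*y2 = 0"
  proof -
    have "P*x2 + S1*y2 = 2 * ((a+d)/2*x2*x3*x4 + (a-d)/2*x2*y3*y4 + (b+c)/2*y2*x3*y4 + (b-c)/2*y2*y3*x4)"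
      unfolding P_def S1_def qA_def qB_def qC_def qD_def by (simp add: field_simps)
    then show ?thesis unfolding assms(3) by simp
  qed
  have e4: "S2*x2 + R*y2 = 0"
  proof -
    have "S2*x2 + R*y2 = 2 * ((a+d)/2*y2*y3*y4 + (a-d)/2*y2*x3*x4 + (b+c)/2*x2*y3*x4 + (b-c)/2*x2*x3*y4)"
      unfolding R_def S2_def qA_def qB_def qC_def qD_def by (simp add: field_simps)
    then show ?thesis unfolding assms(4) by simp
  qed
  have e5: "P*x1 + S2*y1 = 0"
  proof -
    have "P*x1 + S2*y1 = 2 * ((a+d)/2*x1*x3*x4 + (a-d)/2*x1*y3*y4 + (b+c)/2*y1*y3*x4 + (b-c)/2*y1*x3*y4)"
      unfolding P_def S2_def qA_def qB_def qC_def qD_def by (simp add: field_simps)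
    then show ?thesis unfolding assms(5) by simp
  qed
  have e6: "S1*x1 + R*y1 = 0"
  proof -
    have "S1*x1 + R*y1 = 2 * ((a+d)/2*y1*y3*y4 + (a-d)/2*y1*x3*x4 + (b+c)/2*x1*x3*y4 + (b-c)/2*x1*y3*x4)"
      unfolding R_def S1_def qA_def qB_def qC_def qD_def by (simp add: field_simps)
    then show ?thesis unfolding assms(6) by simp
  qed
  obtain \<alpha> where al: "P = \<alpha>*y1*y2" "S1 = -\<alpha>*y1*x2" "S2 = -\<alpha>*x1*y2" "R = \<alpha>*x1*x2"
    using rank1[OF assms(1,2) e3 e4 e5 e6] by blast
  have "a * qA x3 y3 x4 y4 = (P + R)/2" "d * qD x3 y3 x4 y4 = (P - R)/2"
    "b * qB x3 y3 x4 y4 = (S1 + S2)/2" "c * qC x3 y3 x4 y4 = (S1 - S2)/2"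
    unfolding P_def R_def S1_def S2_def by (simp_all add: field_simps)
  then show ?thesis unfolding al qA_def qB_def qC_def qD_def
    by (intro exI[of _ "\<alpha>/2"]) (simp add: field_simps)
qed

lemma alpha12:
  assumes "valid4 v" "\<forall>i<8. dG a b c d v i = 0"
  shows "\<exists>\<alpha>. a * qA (v 4) (v 5) (v 6) (v 7) = \<alpha> * qA (v 0) (v 1) (v 2) (v 3) \<and>
              b * qB (v 4) (v 5) (v 6) (v 7) = -\<alpha> * qB (v 0) (v 1) (v 2) (v 3) \<and>
              c * qC (v 4) (v 5) (v 6) (v 7) = \<alpha> * qC (v 0) (v 1) (v 2) (v 3) \<and>
              d * qD (v 4) (v 5) (v 6) (v 7) = -\<alpha> * qD (v 0) (v 1) (v 2) (v 3)"
proof (rule alpha_gen)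
  show "(v 0, v 1) \<noteq> (0,0)" "(v 2, v 3) \<noteq> (0,0)" using valid4_pairs[OF assms(1)] by simp_all
  have d: "dG a b c d v 0 = 0" "dG a b c d v 1 = 0" "dG a b c d v 2 = 0" "dG a b c d v 3 = 0"
    using assms(2) unfolding all8 by simp_all
  then show "(a+d)/2*(v 2)*(v 4)*(v 6) + (a-d)/2*(v 2)*(v 5)*(v 7) + (b+c)/2*(v 3)*(v 4)*(v 7) + (b-c)/2*(v 3)*(v 5)*(v 6) = 0"
    "(a+d)/2*(v 3)*(v 5)*(v 7) + (a-d)/2*(v 3)*(v 4)*(v 6) + (b+c)/2*(v 2)*(v 5)*(v 6) + (b-c)/2*(v 2)*(v 4)*(v 7) = 0"
    "(a+d)/2*(v 0)*(v 4)*(v 6) + (a-d)/2*(v 0)*(v 5)*(v 7) + (b+c)/2*(v 1)*(v 5)*(v 6) + (b-c)/2*(v 1)*(v 4)*(v 7) = 0"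
    "(a+d)/2*(v 1)*(v 5)*(v 7) + (a-d)/2*(v 1)*(v 4)*(v 6) + (b+c)/2*(v 0)*(v 4)*(v 7) + (b-c)/2*(v 0)*(v 5)*(v 6) = 0"
    unfolding dG_def Let_def by simp_all
qed

lemma alpha34:
  assumes "valid4 v" "\<forall>i<8. dG a b c d v i = 0"
  shows "\<exists>\<beta>. a * qA (v 0) (v 1) (v 2) (v 3) = \<beta> * qA (v 4) (v 5) (v 6) (v 7) \<and>
              b * qB (v 0) (v 1) (v 2) (v 3) = -\<beta> * qB (v 4) (v 5) (v 6) (v 7) \<and>
              c * qC (v 0) (v 1) (v 2) (v 3) = \<beta> * qC (v 4) (v 5) (v 6) (v 7) \<and>
              d * qD (v 0) (v 1) (v 2) (v 3) = -\<beta> * qD (v 4) (v 5) (v 6) (v 7)"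
proof (rule alpha_gen)
  show "(v 4, v 5) \<noteq> (0,0)" "(v 6, v 7) \<noteq> (0,0)" using valid4_pairs[OF assms(1)] by simp_all
  have d: "dG a b c d v 4 = 0" "dG a b c d v 5 = 0" "dG a b c d v 6 = 0" "dG a b c d v 7 = 0"
    using assms(2) unfolding all8 by simp_all
  then show "(a+d)/2*(v 6)*(v 0)*(v 2) + (a-d)/2*(v 6)*(v 1)*(v 3) + (b+c)/2*(v 7)*(v 0)*(v 3) + (b-c)/2*(v 7)*(v 1)*(v 2) = 0"
    "(a+d)/2*(v 7)*(v 1)*(v 3) + (a-d)/2*(v 7)*(v 0)*(v 2) + (b+c)/2*(v 6)*(v 1)*(v 2) + (b-c)/2*(v 6)*(v 0)*(v 3) = 0"
    "(a+d)/2*(v 4)*(v 0)*(v 2) + (a-d)/2*(v 4)*(v 1)*(v 3) + (b+c)/2*(v 5)*(v 1)*(v 2) + (b-c)/2*(v 5)*(v 0)*(v 3) = 0"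
    "(a+d)/2*(v 5)*(v 1)*(v 3) + (a-d)/2*(v 5)*(v 0)*(v 2) + (b+c)/2*(v 4)*(v 0)*(v 3) + (b-c)/2*(v 4)*(v 1)*(v 2) = 0"
    unfolding dG_def Let_def by (simp_all add: algebra_simps)
qed

lemma sgnAB:
  assumes "(x1, y1) \<noteq> (0::complex, 0)" "(x2, y2) \<noteq> (0::complex, 0)" "qA x1 y1 x2 y2 = 0" "qB x1 y1 x2 y2 = 0"
  shows "(y1 = x1 \<or> y1 = -x1) \<and> (y2 = x2 \<or> y2 = -x2)"
proof -
  have "(x1+y1)*(x2+y2) = qA x1 y1 x2 y2 + qB x1 y1 x2 y2" unfolding qA_def qB_def by (simp add: algebra_simps)
  then have h1: "y1 = -x1 \<or> y2 = -x2" using assms(3,4) by (simp add: add_eq_0_iff add.commute)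
  have "(x1-y1)*(x2-y2) = qA x1 y1 x2 y2 - qB x1 y1 x2 y2" unfolding qA_def qB_def by (simp add: algebra_simps)
  then have h2: "x1 = y1 \<or> x2 = y2" using assms(3,4) by simp
  show ?thesis using h1 h2 assms(1,2) by auto
qed

lemma sgnCD:
  assumes "(x1, y1) \<noteq> (0::complex, 0)" "(x2, y2) \<noteq> (0::complex, 0)" "qC x1 y1 x2 y2 = 0" "qD x1 y1 x2 y2 = 0"
  shows "(y1 = x1 \<or> y1 = -x1) \<and> (y2 = x2 \<or> y2 = -x2)"
proof -
  have "(x1-y1)*(x2+y2) = qC x1 y1 x2 y2 + qD x1 y1 x2 y2" unfolding qC_def qD_def by (simp add: algebra_simps)
  then have h1: "x1 = y1 \<or> y2 = -x2" using assms(3,4) by (simp add: add_eq_0_iff add.commute)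
  have "(x1+y1)*(x2-y2) = qD x1 y1 x2 y2 - qC x1 y1 x2 y2" unfolding qC_def qD_def by (simp add: algebra_simps)
  then have h2: "y1 = -x1 \<or> x2 = y2" using assms(3,4) by (simp add: add_eq_0_iff add.commute)
  show ?thesis using h1 h2 assms(1,2) by auto
qed

lemma notall0:
  assumes "(x1, y1) \<noteq> (0::complex, 0)" "(x2, y2) \<noteq> (0::complex, 0)"
  shows "\<not> (qA x1 y1 x2 y2 = 0 \<and> qB x1 y1 x2 y2 = 0 \<and> qC x1 y1 x2 y2 = 0 \<and> qD x1 y1 x2 y2 = 0)"
proof
  assume h: "qA x1 y1 x2 y2 = 0 \<and> qB x1 y1 x2 y2 = 0 \<and> qC x1 y1 x2 y2 = 0 \<and> qD x1 y1 x2 y2 = 0"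
  have "2*(x1*x2) = qA x1 y1 x2 y2 + qD x1 y1 x2 y2" "2*(y1*y2) = qA x1 y1 x2 y2 - qD x1 y1 x2 y2"
    "2*(x1*y2) = qB x1 y1 x2 y2 + qC x1 y1 x2 y2" "2*(y1*x2) = qB x1 y1 x2 y2 - qC x1 y1 x2 y2"
    unfolding qA_def qB_def qC_def qD_def by (simp_all add: algebra_simps)
  then have "x1*x2 = 0" "y1*y2 = 0" "x1*y2 = 0" "y1*x2 = 0" using h by simp_all
  then show False using assms by auto
qed

lemma sgn_or:
  assumes "(x1, y1) \<noteq> (0::complex, 0)" "(x2, y2) \<noteq> (0::complex, 0)"
    "(qA x1 y1 x2 y2 = 0 \<and> qB x1 y1 x2 y2 = 0) \<or> (qC x1 y1 x2 y2 = 0 \<and> qD x1 y1 x2 y2 = 0)"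
  shows "(y1 = x1 \<or> y1 = -x1) \<and> (y2 = x2 \<or> y2 = -x2)"
  using assms(3)
proof
  assume "qA x1 y1 x2 y2 = 0 \<and> qB x1 y1 x2 y2 = 0"
  then show ?thesis using sgnAB[OF assms(1,2)] by blast
next
  assume "qC x1 y1 x2 y2 = 0 \<and> qD x1 y1 x2 y2 = 0"
  then show ?thesis using sgnCD[OF assms(1,2)] by blast
qed

lemma fin_case:
  assumes "\<And>v. valid4 v \<Longrightarrow> \<forall>i<8. dG a b c d v i = 0 \<Longrightarrow>
     ((qA (v 0) (v 1) (v 2) (v 3) = 0 \<and> qB (v 0) (v 1) (v 2) (v 3) = 0) \<or> (qC (v 0) (v 1) (v 2) (v 3) = 0 \<and> qD (v 0) (v 1) (v 2) (v 3) = 0)) \<and>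
     ((qA (v 4) (v 5) (v 6) (v 7) = 0 \<and> qB (v 4) (v 5) (v 6) (v 7) = 0) \<or> (qC (v 4) (v 5) (v 6) (v 7) = 0 \<and> qD (v 4) (v 5) (v 6) (v 7) = 0))"
  shows "\<not> zdim_ge (sing_locus a b c d) 1"
proof (rule grid_not_dim1, rule ballI)
  fix p assume "p \<in> sing_locus a b c d"
  then obtain v where v: "valid4 v" "p = pt4 v" "\<forall>i<8. dG a b c d v i = 0" by (rule sing_memE)
  have pr: "(v 0, v 1) \<noteq> (0,0)" "(v 2, v 3) \<noteq> (0,0)" "(v 4, v 5) \<noteq> (0,0)" "(v 6, v 7) \<noteq> (0,0)"
    using valid4_pairs[OF v(1)] by simp_all
  have h: "((qA (v 0) (v 1) (v 2) (v 3) = 0 \<and> qB (v 0) (v 1) (v 2) (v 3) = 0) \<or> (qC (v 0) (v 1) (v 2) (v 3) = 0 \<and> qD (v 0) (v 1) (v 2) (v 3) = 0))"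
     "((qA (v 4) (v 5) (v 6) (v 7) = 0 \<and> qB (v 4) (v 5) (v 6) (v 7) = 0) \<or> (qC (v 4) (v 5) (v 6) (v 7) = 0 \<and> qD (v 4) (v 5) (v 6) (v 7) = 0))"
    using assms[OF v(1) v(3)] by (rule conjunct1, rule conjunct2)
  have s: "(v 1 = v 0 \<or> v 1 = - v 0) \<and> (v 3 = v 2 \<or> v 3 = - v 2)"
    by (rule sgn_or[OF pr(1,2) h(1)])
  have t: "(v 5 = v 4 \<or> v 5 = - v 4) \<and> (v 7 = v 6 \<or> v 7 = - v 6)"
    by (rule sgn_or[OF pr(3,4) h(2)])
  have "\<forall>k<4. v (2*k+1) = v (2*k) \<or> v (2*k+1) = - v (2*k)"
    unfolding all4 using s t by simp
  then show "\<exists>v. valid4 v \<and> p = pt4 v \<and> (\<forall>k<4. v (2*k+1) = v (2*k) \<or> v (2*k+1) = - v (2*k))"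
    using v(1,2) by blast
qed

lemma alpha_beta:
  assumes "valid4 v" "\<forall>i<8. dG a b c d v i = 0"
  obtains \<alpha> \<beta> A B C D A' B' C' D' where
    "A = qA (v 0) (v 1) (v 2) (v 3)" "B = qB (v 0) (v 1) (v 2) (v 3)" "C = qC (v 0) (v 1) (v 2) (v 3)" "D = qD (v 0) (v 1) (v 2) (v 3)"
    "A' = qA (v 4) (v 5) (v 6) (v 7)" "B' = qB (v 4) (v 5) (v 6) (v 7)" "C' = qC (v 4) (v 5) (v 6) (v 7)" "D' = qD (v 4) (v 5) (v 6) (v 7)"
    "a * A' = \<alpha> * A" "b * B' = -\<alpha> * B" "c * C' = \<alpha> * C" "d * D' = -\<alpha> * D"
    "a * A = \<beta> * A'" "b * B = -\<beta> * B'" "c * C = \<beta> * C'" "d * D = -\<beta> * D'"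
    "\<not> (A = 0 \<and> B = 0 \<and> C = 0 \<and> D = 0)" "\<not> (A' = 0 \<and> B' = 0 \<and> C' = 0 \<and> D' = 0)"
proof -
  have pr: "(v 0, v 1) \<noteq> (0,0)" "(v 2, v 3) \<noteq> (0,0)" "(v 4, v 5) \<noteq> (0,0)" "(v 6, v 7) \<noteq> (0,0)"
    using valid4_pairs[OF assms(1)] by simp_all
  obtain \<alpha> where al: "a * qA (v 4) (v 5) (v 6) (v 7) = \<alpha> * qA (v 0) (v 1) (v 2) (v 3)"
              "b * qB (v 4) (v 5) (v 6) (v 7) = -\<alpha> * qB (v 0) (v 1) (v 2) (v 3)"
              "c * qC (v 4) (v 5) (v 6) (v 7) = \<alpha> * qC (v 0) (v 1) (v 2) (v 3)"
              "d * qD (v 4) (v 5) (v 6) (v 7) = -\<alpha> * qD (v 0) (v 1) (v 2) (v 3)"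
    using alpha12[OF assms] by blast
  obtain \<beta> where be: "a * qA (v 0) (v 1) (v 2) (v 3) = \<beta> * qA (v 4) (v 5) (v 6) (v 7)"
              "b * qB (v 0) (v 1) (v 2) (v 3) = -\<beta> * qB (v 4) (v 5) (v 6) (v 7)"
              "c * qC (v 0) (v 1) (v 2) (v 3) = \<beta> * qC (v 4) (v 5) (v 6) (v 7)"
              "d * qD (v 0) (v 1) (v 2) (v 3) = -\<beta> * qD (v 4) (v 5) (v 6) (v 7)"
    using alpha34[OF assms] by blast
  show ?thesis using that[OF refl refl refl refl refl refl refl refl al be notall0[OF pr(1,2)] notall0[OF pr(3,4)]] .
qed

definition ABCD_ok :: "complex \<Rightarrow> complex \<Rightarrow> complex \<Rightarrow> complex \<Rightarrow> bool" where
  "ABCD_ok A B C D \<longleftrightarrow> (A = 0 \<and> B = 0) \<or> (C = 0 \<and> D = 0)"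

lemma fin_case2:
  assumes "\<And>\<alpha> \<beta> A B C D A' B' C' D'.
    a * A' = \<alpha> * A \<Longrightarrow> b * B' = -\<alpha> * B \<Longrightarrow> c * C' = \<alpha> * C \<Longrightarrow> d * D' = -\<alpha> * D \<Longrightarrow>
    a * A = \<beta> * A' \<Longrightarrow> b * B = -\<beta> * B' \<Longrightarrow> c * C = \<beta> * C' \<Longrightarrow> d * D = -\<beta> * D' \<Longrightarrow>
    \<not> (A = 0 \<and> B = 0 \<and> C = 0 \<and> D = 0) \<Longrightarrow> \<not> (A' = 0 \<and> B' = 0 \<and> C' = 0 \<and> D' = 0) \<Longrightarrow>
    ABCD_ok A B C D \<and> ABCD_ok A' B' C' D'"
  shows "\<not> zdim_ge (sing_locus a b c d) 1"
proof (rule fin_case)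
  fix v assume v: "valid4 v" "\<forall>i<8. dG a b c d v i = 0"
  obtain \<alpha> \<beta> A B C D A' B' C' D' where
    e: "A = qA (v 0) (v 1) (v 2) (v 3)" "B = qB (v 0) (v 1) (v 2) (v 3)" "C = qC (v 0) (v 1) (v 2) (v 3)" "D = qD (v 0) (v 1) (v 2) (v 3)"
    "A' = qA (v 4) (v 5) (v 6) (v 7)" "B' = qB (v 4) (v 5) (v 6) (v 7)" "C' = qC (v 4) (v 5) (v 6) (v 7)" "D' = qD (v 4) (v 5) (v 6) (v 7)"
    and h: "a * A' = \<alpha> * A" "b * B' = -\<alpha> * B" "c * C' = \<alpha> * C" "d * D' = -\<alpha> * D"
    "a * A = \<beta> * A'" "b * B = -\<beta> * B'" "c * C = \<beta> * C'" "d * D = -\<beta> * D'"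
    "\<not> (A = 0 \<and> B = 0 \<and> C = 0 \<and> D = 0)" "\<not> (A' = 0 \<and> B' = 0 \<and> C' = 0 \<and> D' = 0)"
    by (rule alpha_beta[OF v])
  have "ABCD_ok A B C D \<and> ABCD_ok A' B' C' D'" by (rule assms[OF h])
  then show "((qA (v 0) (v 1) (v 2) (v 3) = 0 \<and> qB (v 0) (v 1) (v 2) (v 3) = 0) \<or> (qC (v 0) (v 1) (v 2) (v 3) = 0 \<and> qD (v 0) (v 1) (v 2) (v 3) = 0)) \<and>
     ((qA (v 4) (v 5) (v 6) (v 7) = 0 \<and> qB (v 4) (v 5) (v 6) (v 7) = 0) \<or> (qC (v 4) (v 5) (v 6) (v 7) = 0 \<and> qD (v 4) (v 5) (v 6) (v 7) = 0))"
    unfolding ABCD_ok_def e by simp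
qed

lemma case_F1a:
  assumes "a = 0" "b = 0" "c \<noteq> 0" "d \<noteq> 0"
  shows "\<not> zdim_ge (sing_locus a b c d) 1"
proof (rule fin_case2)
  fix \<alpha> \<beta> A B C D A' B' C' D' :: complex
  assume h: "a * A' = \<alpha> * A" "b * B' = -\<alpha> * B" "c * C' = \<alpha> * C" "d * D' = -\<alpha> * D"
    "a * A = \<beta> * A'" "b * B = -\<beta> * B'" "c * C = \<beta> * C'" "d * D = -\<beta> * D'"
    "\<not> (A = 0 \<and> B = 0 \<and> C = 0 \<and> D = 0)" "\<not> (A' = 0 \<and> B' = 0 \<and> C' = 0 \<and> D' = 0)"
  show "ABCD_ok A B C D \<and> ABCD_ok A' B' C' D'"
  proof (cases "\<alpha> = 0")
    case True
    then have C'D': "C' = 0" "D' = 0" using h(3,4) assms by simp_all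
    show ?thesis
    proof (cases "\<beta> = 0")
      case True
      then have "C = 0" "D = 0" using h(7,8) assms by simp_all
      then show ?thesis using C'D' unfolding ABCD_ok_def by simp
    next
      case False
      then have "A' = 0" "B' = 0" using h(5,6) assms by simp_all
      then show ?thesis using C'D' h(10) by simp
    qed
  next
    case False
    then have AB: "A = 0" "B = 0" using h(1,2) assms by simp_all
    show ?thesis
    proof (cases "\<beta> = 0")
      case True
      then have "C = 0" "D = 0" using h(7,8) assms by simp_all
      then show ?thesis using AB h(9) by simp
    next
      case False
      then have "A' = 0" "B' = 0" using h(5,6) assms by simp_all
      then show ?thesis using AB unfolding ABCD_ok_def by simp
    qed
  qed
qed

lemma case_F2a:
  assumes "b = -a" "a \<noteq> 0" "c = 0" "d = 0"
  shows "\<not> zdim_ge (sing_locus a b c d) 1"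
proof (rule fin_case2)
  fix \<alpha> \<beta> A B C D A' B' C' D' :: complex
  assume h: "a * A' = \<alpha> * A" "b * B' = -\<alpha> * B" "c * C' = \<alpha> * C" "d * D' = -\<alpha> * D"
    "a * A = \<beta> * A'" "b * B = -\<beta> * B'" "c * C = \<beta> * C'" "d * D = -\<beta> * D'"
    "\<not> (A = 0 \<and> B = 0 \<and> C = 0 \<and> D = 0)" "\<not> (A' = 0 \<and> B' = 0 \<and> C' = 0 \<and> D' = 0)"
  show "ABCD_ok A B C D \<and> ABCD_ok A' B' C' D'"
  proof (cases "\<alpha> = 0")
    case True
    then have AB': "A' = 0" "B' = 0" using h(1,2) assms by simp_all
    show ?thesis
    proof (cases "\<beta> = 0")
      case True
      then have "A = 0" "B = 0" using h(5,6) assms by simp_all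
      then show ?thesis using AB' unfolding ABCD_ok_def by simp
    next
      case False
      then have "C' = 0" "D' = 0" using h(7,8) assms by simp_all
      then show ?thesis using AB' h(10) by simp
    qed
  next
    case False
    then have CD: "C = 0" "D = 0" using h(3,4) assms by simp_all
    show ?thesis
    proof (cases "\<beta> = 0")
      case True
      then have "A = 0" "B = 0" using h(5,6) assms by simp_all
      then show ?thesis using CD h(9) by simp
    next
      case False
      then have "C' = 0" "D' = 0" using h(7,8) assms by simp_all
      then show ?thesis using CD unfolding ABCD_ok_def by simp
    qed
  qed
qed

lemma case_F2b:
  assumes "b = -a" "a \<noteq> 0" "c \<noteq> 0" "d * d = c * c" "c * c \<noteq> a * a"
  shows "\<not> zdim_ge (sing_locus a b c d) 1"
proof (rule fin_case2)
  fix \<alpha> \<beta> A B C D A' B' C' D' :: complex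
  assume h: "a * A' = \<alpha> * A" "b * B' = -\<alpha> * B" "c * C' = \<alpha> * C" "d * D' = -\<alpha> * D"
    "a * A = \<beta> * A'" "b * B = -\<beta> * B'" "c * C = \<beta> * C'" "d * D = -\<beta> * D'"
    "\<not> (A = 0 \<and> B = 0 \<and> C = 0 \<and> D = 0)" "\<not> (A' = 0 \<and> B' = 0 \<and> C' = 0 \<and> D' = 0)"
  have d0: "d \<noteq> 0" using assms(3,4) by auto
  have hB: "a * B' = \<alpha> * B" "a * B = \<beta> * B'" using h(2,6) assms(1) by simp_all
  have eA: "(a*a) * A = (\<alpha>*\<beta>) * A"
  proof -
    have "(a*a)*A = a*(\<beta>*A')" using h(5) by (simp add: mult.assoc)
    also have "\<dots> = \<beta>*(a*A')" by (simp add: ac_simps)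
    also have "\<dots> = (\<alpha>*\<beta>)*A" using h(1) by (simp add: ac_simps)
    finally show ?thesis .
  qed
  have eB: "(a*a) * B = (\<alpha>*\<beta>) * B"
  proof -
    have "(a*a)*B = a*(\<beta>*B')" using hB(2) by (simp add: mult.assoc)
    also have "\<dots> = \<beta>*(a*B')" by (simp add: ac_simps)
    also have "\<dots> = (\<alpha>*\<beta>)*B" using hB(1) by (simp add: ac_simps)
    finally show ?thesis .
  qed
  have eC: "(c*c) * C = (\<alpha>*\<beta>) * C"
  proof -
    have "(c*c)*C = c*(\<beta>*C')" using h(7) by (simp add: mult.assoc)
    also have "\<dots> = \<beta>*(c*C')" by (simp add: ac_simps)
    also have "\<dots> = (\<alpha>*\<beta>)*C" using h(3) by (simp add: ac_simps)
    finally show ?thesis .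
  qed
  have eD: "(c*c) * D = (\<alpha>*\<beta>) * D"
  proof -
    have "(c*c)*D = (d*d)*D" using assms(4) by simp
    also have "\<dots> = d*(-\<beta>*D')" using h(8) by (simp add: mult.assoc)
    also have "\<dots> = -\<beta>*(d*D')" by (simp add: ac_simps)
    also have "\<dots> = (\<alpha>*\<beta>)*D" using h(4) by (simp add: ac_simps)
    finally show ?thesis .
  qed
  show "ABCD_ok A B C D \<and> ABCD_ok A' B' C' D'"
  proof (cases "\<alpha>*\<beta> = a*a")
    case True
    then have "C = 0" "D = 0" using eC eD assms(5) by simp_all
    moreover then have "C' = 0" "D' = 0" using h(3,4) assms(3) d0 by simp_all
    ultimately show ?thesis unfolding ABCD_ok_def by simp
  next
    case False
    then have "A = 0" "B = 0" using eA eB by simp_all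
    moreover then have "A' = 0" "B' = 0" using h(1) hB(1) assms(2) by simp_all
    ultimately show ?thesis unfolding ABCD_ok_def by simp
  qed
qed

lemma line_holo: "(\<lambda>s. peval f (\<lambda>i. P i + s * (Q i - P i))) holomorphic_on UNIV"
  unfolding peval_def mono_eval_def by (intro holomorphic_intros)

lemma finite_zero_pair:
  assumes "(p0, p1) \<noteq> (0::complex, 0)"
  shows "finite {s. p0 + s*q0 = 0 \<and> p1 + s*q1 = 0}"
proof (cases "p0 = 0")
  case True
  then have "p1 \<noteq> 0" using assms by auto
  then have "{s. p0 + s*q0 = 0 \<and> p1 + s*q1 = 0} \<subseteq> {-p1/q1}"
    by (cases "q1 = 0") (auto simp: field_simps eq_neg_iff_add_eq_0)
  then show ?thesis using finite_subset by blast
next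
  case False
  then have "{s. p0 + s*q0 = 0 \<and> p1 + s*q1 = 0} \<subseteq> {-p0/q0}"
    by (cases "q0 = 0") (auto simp: field_simps eq_neg_iff_add_eq_0)
  then show ?thesis using finite_subset by blast
qed

lemma finite_bad:
  assumes "valid4 P" "valid4 Q"
  shows "finite {s. \<not> valid4 (\<lambda>i. P i + s * (Q i - P i))}"
proof -
  have sub: "{s. \<not> valid4 (\<lambda>i. P i + s * (Q i - P i))} \<subseteq>
     (\<Union>k\<in>{..<4}. {s. P (2*k) + s*(Q (2*k) - P (2*k)) = 0 \<and> P (2*k+1) + s*(Q (2*k+1) - P (2*k+1)) = 0})"
  proof
    fix s assume "s \<in> {s. \<not> valid4 (\<lambda>i. P i + s * (Q i - P i))}"
    then have nv: "\<not> valid4 (\<lambda>i. P i + s * (Q i - P i))" by simp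
    have "\<forall>i\<ge>8. P i + s * (Q i - P i) = 0" using assms unfolding valid4_def by simp
    then obtain k where "k < 4" "P (2*k) + s*(Q (2*k) - P (2*k)) = 0 \<and> P (2*k+1) + s*(Q (2*k+1) - P (2*k+1)) = 0"
      using nv unfolding valid4_def by auto
    then show "s \<in> (\<Union>k\<in>{..<4}. {s. P (2*k) + s*(Q (2*k) - P (2*k)) = 0 \<and> P (2*k+1) + s*(Q (2*k+1) - P (2*k+1)) = 0})"
      by blast
  qed
  have "finite (\<Union>k\<in>{..<4}. {s. P (2*k) + s*(Q (2*k) - P (2*k)) = 0 \<and> P (2*k+1) + s*(Q (2*k+1) - P (2*k+1)) = 0})"
  proof (rule finite_UN_I)
    show "finite {..<(4::nat)}" by simp
  next
    fix k :: nat assume "k \<in> {..<4}"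
    then have "(P (2*k), P (2*k+1)) \<noteq> (0,0)" using assms(1) unfolding valid4_def by auto
    then show "finite {s. P (2*k) + s*(Q (2*k) - P (2*k)) = 0 \<and> P (2*k+1) + s*(Q (2*k+1) - P (2*k+1)) = 0}"
      by (rule finite_zero_pair)
  qed
  then show ?thesis using sub finite_subset by blast
qed

lemma zirr_W:
  assumes W: "W \<subseteq> {v. valid4 v}" "W \<noteq> {}" "zclosed (pt4 ` W)"
    and lin: "\<And>P Q s. P \<in> W \<Longrightarrow> Q \<in> W \<Longrightarrow> valid4 (\<lambda>i. P i + s * (Q i - P i)) \<Longrightarrow> (\<lambda>i. P i + s * (Q i - P i)) \<in> W"
  shows "zirreducible (pt4 ` W)"
proof -
  have "\<forall>A B. zclosed A \<longrightarrow> zclosed B \<longrightarrow> pt4 ` W \<subseteq> A \<union> B \<longrightarrow> pt4 ` W \<subseteq> A \<or> pt4 ` W \<subseteq> B"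
  proof (intro allI impI)
    fix A B assume A: "zclosed A" and B: "zclosed B" and cov: "pt4 ` W \<subseteq> A \<union> B"
    show "pt4 ` W \<subseteq> A \<or> pt4 ` W \<subseteq> B"
    proof (rule ccontr)
      assume "\<not> (pt4 ` W \<subseteq> A \<or> pt4 ` W \<subseteq> B)"
      then obtain P Q where P: "P \<in> W" "pt4 P \<notin> A" and Q: "Q \<in> W" "pt4 Q \<notin> B" by blast
      obtain FA where FA: "\<forall>f\<in>FA. multihom f" "A = zero_locus FA" using A by (rule zclosedE)
      obtain FB where FB: "\<forall>f\<in>FB. multihom f" "B = zero_locus FB" using B by (rule zclosedE)
      have vP: "valid4 P" and vQ: "valid4 Q" using P(1) Q(1) W(1) by auto
      have "\<not> (\<forall>f\<in>FA. peval f P = 0)" using P(2) FA(2) zero_locus_iff[OF FA(1) vP] by simp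
      then obtain f where f: "f \<in> FA" "peval f P \<noteq> 0" by blast
      have "\<not> (\<forall>g\<in>FB. peval g Q = 0)" using Q(2) FB(2) zero_locus_iff[OF FB(1) vQ] by simp
      then obtain g where g: "g \<in> FB" "peval g Q \<noteq> 0" by blast
      define L where "L = (\<lambda>s. (\<lambda>i. P i + s * (Q i - P i)))"
      have L0: "L 0 = P" and L1: "L 1 = Q" unfolding L_def by auto
      define h1 where "h1 = (\<lambda>s. peval f (L s))"
      define h2 where "h2 = (\<lambda>s. peval g (L s))"
      have hol1: "h1 holomorphic_on UNIV" unfolding h1_def L_def by (rule line_holo)
      have hol2: "h2 holomorphic_on UNIV" unfolding h2_def L_def by (rule line_holo)
      define E where "E = {s. \<not> valid4 (L s)}"
      have finE: "finite E" unfolding E_def L_def by (rule finite_bad[OF vP vQ])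
      have key: "h1 s = 0 \<or> h2 s = 0" if "s \<notin> E" for s
      proof -
        have vL: "valid4 (L s)" using that unfolding E_def by simp
        have "L s \<in> W" using lin[OF P(1) Q(1)] vL unfolding L_def by simp
        then have "pt4 (L s) \<in> A \<union> B" using cov by blast
        then show ?thesis
        proof
          assume "pt4 (L s) \<in> A"
          then have "\<forall>f\<in>FA. peval f (L s) = 0" using FA(2) zero_locus_iff[OF FA(1) vL] by simp
          then show ?thesis unfolding h1_def using f(1) by blast
        next
          assume "pt4 (L s) \<in> B"
          then have "\<forall>g\<in>FB. peval g (L s) = 0" using FB(2) zero_locus_iff[OF FB(1) vL] by simp
          then show ?thesis unfolding h2_def using g(1) by blast
        qed
      qed
      have "continuous (at 0) h1"
        using hol1 holomorphic_on_imp_continuous_on continuous_on_eq_continuous_at open_UNIV by blast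
      moreover have "h1 0 \<noteq> 0" unfolding h1_def L0 using f(2) .
      ultimately obtain e where e: "e > 0" "\<forall>y. dist 0 y < e \<longrightarrow> h1 y \<noteq> 0"
        using continuous_at_avoid by blast
      define U where "U = ball 0 e - E"
      have U0: "h2 z = 0" if "z \<in> U" for z
      proof -
        have "z \<notin> E" "dist 0 z < e" using that unfolding U_def by auto
        then show ?thesis using key e(2) by blast
      qed
      have "(0::complex) islimpt ball 0 e" using e(1) by (simp add: islimpt_ball)
      then have "(0::complex) islimpt (E \<union> U)" by (rule islimpt_subset) (auto simp: U_def)
      then have lim: "(0::complex) islimpt U" using islimpt_Un_finite[OF finE] by blast
      have "h2 1 = 0"
        by (rule analytic_continuation[OF hol2 open_UNIV connected_UNIV _ _ lim U0]) auto
      then show False using g(2) unfolding h2_def L1 by simp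
    qed
  qed
  then show ?thesis unfolding zirreducible_def using W(2) W(3) by simp
qed

definition Wt :: "(nat \<Rightarrow> nat) \<Rightarrow> nat set \<Rightarrow> (nat \<Rightarrow> complex) set" where
  "Wt \<tau> Z = {v. valid4 v \<and> (\<forall>j<8. v j = v (\<tau> j)) \<and> (\<forall>i\<in>Z. v i = 0)}"

definition Ft :: "(nat \<Rightarrow> nat) \<Rightarrow> nat set \<Rightarrow> mpoly8 set" where
  "Ft \<tau> Z = {quad (2*k) (\<tau> (2*k+1)) 1 + quad (2*k+1) (\<tau> (2*k)) (-1) | k. k < 4} \<union> {lin i 1 | i. i \<in> Z}"

definition tau_ok :: "(nat \<Rightarrow> nat) \<Rightarrow> nat set \<Rightarrow> bool" where
  "tau_ok \<tau> Z \<longleftrightarrow> (\<forall>j<8. \<tau> j < 8) \<and> (\<forall>k<4. \<tau> (2*k) div 2 = \<tau> (2*k+1) div 2 \<and> \<tau> (2*k) \<noteq> \<tau> (2*k+1)) \<and>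
     (\<forall>j<8. \<tau> (\<tau> j) = \<tau> j) \<and> (\<forall>i\<in>Z. i < 8 \<and> \<tau> i = i)"

lemma multihom_lin:
  assumes "i < 8"
  shows "multihom (lin i c)"
proof -
  define k where "k = i div 2"
  have k: "k < 4" using assms unfolding k_def by auto
  have "i = 2*k \<or> i = 2*k+1" unfolding k_def by presburger
  then show ?thesis using multihom_lin1[OF k] by (elim disjE) simp_all
qed

lemma Ft_multihom:
  assumes "tau_ok \<tau> Z"
  shows "\<forall>f\<in>Ft \<tau> Z. multihom f"
proof
  fix f assume "f \<in> Ft \<tau> Z"
  then consider (q) k where "k < 4" "f = quad (2*k) (\<tau> (2*k+1)) 1 + quad (2*k+1) (\<tau> (2*k)) (-1)"
    | (l) i where "i \<in> Z" "f = lin i 1"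
    unfolding Ft_def by blast
  then show "multihom f"
  proof cases
    case q
    have a: "2*k < (8::nat)" "2*k+1 < (8::nat)" using q(1) by auto
    have t: "\<tau> (2*k) < 8" "\<tau> (2*k+1) < 8" "\<tau> (2*k) div 2 = \<tau> (2*k+1) div 2"
      using assms a q(1) unfolding tau_ok_def by auto
    have "(2*k+1) div 2 = (2*k) div 2" by simp
    then show ?thesis unfolding q(2) using t a by (intro multihom_quad2) auto
  next
    case l
    then show ?thesis using assms multihom_lin unfolding tau_ok_def by auto
  qed
qed

lemma peval_Ft_q: "peval (quad (2*k) (\<tau> (2*k+1)) 1 + quad (2*k+1) (\<tau> (2*k)) (-1)) v =
   v (2*k) * v (\<tau> (2*k+1)) - v (2*k+1) * v (\<tau> (2*k))"
  by (simp add: peval_add)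

lemma Ft_zero_iff:
  "(\<forall>f\<in>Ft \<tau> Z. peval f v = 0) \<longleftrightarrow>
     (\<forall>k<4. v (2*k) * v (\<tau> (2*k+1)) = v (2*k+1) * v (\<tau> (2*k))) \<and> (\<forall>i\<in>Z. v i = 0)"
proof
  assume h: "\<forall>f\<in>Ft \<tau> Z. peval f v = 0"
  have "\<forall>k<4. v (2*k) * v (\<tau> (2*k+1)) = v (2*k+1) * v (\<tau> (2*k))"
  proof (intro allI impI)
    fix k :: nat assume "k < 4"
    then have "quad (2*k) (\<tau> (2*k+1)) 1 + quad (2*k+1) (\<tau> (2*k)) (-1) \<in> Ft \<tau> Z" unfolding Ft_def by blast
    then have "peval (quad (2*k) (\<tau> (2*k+1)) 1 + quad (2*k+1) (\<tau> (2*k)) (-1)) v = 0" using h by blast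
    then show "v (2*k) * v (\<tau> (2*k+1)) = v (2*k+1) * v (\<tau> (2*k))" unfolding peval_Ft_q by simp
  qed
  moreover have "\<forall>i\<in>Z. v i = 0"
  proof
    fix i assume "i \<in> Z"
    then have "lin i 1 \<in> Ft \<tau> Z" unfolding Ft_def by blast
    then have "peval (lin i 1) v = 0" using h by blast
    then show "v i = 0" by simp
  qed
  ultimately show "(\<forall>k<4. v (2*k) * v (\<tau> (2*k+1)) = v (2*k+1) * v (\<tau> (2*k))) \<and> (\<forall>i\<in>Z. v i = 0)" by blast
next
  assume h: "(\<forall>k<4. v (2*k) * v (\<tau> (2*k+1)) = v (2*k+1) * v (\<tau> (2*k))) \<and> (\<forall>i\<in>Z. v i = 0)"
  show "\<forall>f\<in>Ft \<tau> Z. peval f v = 0"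
  proof
    fix f assume "f \<in> Ft \<tau> Z"
    then consider (q) k where "k < 4" "f = quad (2*k) (\<tau> (2*k+1)) 1 + quad (2*k+1) (\<tau> (2*k)) (-1)"
      | (l) i where "i \<in> Z" "f = lin i 1"
      unfolding Ft_def by blast
    then show "peval f v = 0"
    proof cases
      case q
      have "v (2*k) * v (\<tau> (2*k+1)) = v (2*k+1) * v (\<tau> (2*k))" using h q(1) by blast
      then show ?thesis unfolding q(2) peval_Ft_q by simp
    next
      case l
      then show ?thesis using h by simp
    qed
  qed
qed

lemma Wt_closed_eq:
  assumes "tau_ok \<tau> Z"
  shows "pt4 ` Wt \<tau> Z = zero_locus (Ft \<tau> Z)"
proof
  have ok: "\<forall>j<8. \<tau> j < 8" "\<forall>k<4. \<tau> (2*k) div 2 = \<tau> (2*k+1) div 2 \<and> \<tau> (2*k) \<noteq> \<tau> (2*k+1)"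
     "\<forall>j<8. \<tau> (\<tau> j) = \<tau> j" "\<forall>i\<in>Z. i < 8 \<and> \<tau> i = i"
    using assms unfolding tau_ok_def by auto
  show "pt4 ` Wt \<tau> Z \<subseteq> zero_locus (Ft \<tau> Z)"
  proof
    fix p assume "p \<in> pt4 ` Wt \<tau> Z"
    then obtain w where w: "w \<in> Wt \<tau> Z" "p = pt4 w" by blast
    have wv: "valid4 w" "\<forall>j<8. w j = w (\<tau> j)" "\<forall>i\<in>Z. w i = 0" using w(1) unfolding Wt_def by auto
    have "\<forall>k<4. w (2*k) * w (\<tau> (2*k+1)) = w (2*k+1) * w (\<tau> (2*k))"
    proof (intro allI impI)
      fix k :: nat assume "k < 4"
      then have "2*k < 8" "2*k+1 < 8" by auto
      then have "w (2*k) = w (\<tau> (2*k))" "w (2*k+1) = w (\<tau> (2*k+1))" using wv(2) by blast+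
      then show "w (2*k) * w (\<tau> (2*k+1)) = w (2*k+1) * w (\<tau> (2*k))" by (simp add: mult.commute)
    qed
    then have "\<forall>f\<in>Ft \<tau> Z. peval f w = 0" unfolding Ft_zero_iff using wv(3) by blast
    then show "p \<in> zero_locus (Ft \<tau> Z)" using zero_locus_iff[OF Ft_multihom[OF assms] wv(1)] w(2) by blast
  qed
  show "zero_locus (Ft \<tau> Z) \<subseteq> pt4 ` Wt \<tau> Z"
  proof
    fix p assume "p \<in> zero_locus (Ft \<tau> Z)"
    then obtain v where v: "valid4 v" "p = pt4 v" "\<forall>f\<in>Ft \<tau> Z. peval f v = 0" by (rule zero_locus_memE)
    have vF: "\<forall>k<4. v (2*k) * v (\<tau> (2*k+1)) = v (2*k+1) * v (\<tau> (2*k))" "\<forall>i\<in>Z. v i = 0"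
      using v(3) unfolding Ft_zero_iff by auto
    define w where "w = (\<lambda>j. if j < 8 then v (\<tau> j) else 0)"
    have wpair: "(w (2*k), w (2*k+1)) \<noteq> (0,0)" if k: "k < 4" for k
    proof -
      define m where "m = \<tau> (2*k) div 2"
      have a: "2*k < 8" "2*k+1 < 8" using k by auto
      have t: "\<tau> (2*k) < 8" "\<tau> (2*k+1) < 8" "\<tau> (2*k+1) div 2 = m" "\<tau> (2*k) \<noteq> \<tau> (2*k+1)"
        using ok(1,2) a k unfolding m_def by auto
      have m4: "m < 4" using t(1) unfolding m_def by auto
      have vm: "(v (2*m), v (2*m+1)) \<noteq> (0,0)" using v(1) m4 unfolding valid4_def by blast
      have "(\<tau> (2*k) = 2*m \<and> \<tau> (2*k+1) = 2*m+1) \<or> (\<tau> (2*k) = 2*m+1 \<and> \<tau> (2*k+1) = 2*m)"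
        using t(3,4) unfolding m_def by presburger
      then show ?thesis using vm a unfolding w_def by auto
    qed
    have vw: "valid4 w" unfolding valid4_def using wpair by (auto simp: w_def)
    have wW: "w \<in> Wt \<tau> Z"
      unfolding Wt_def using vw ok(1,3) ok(4) vF(2) by (auto simp: w_def)
    have "\<forall>k<4. v (2*k) * w (2*k+1) = v (2*k+1) * w (2*k)"
    proof (intro allI impI)
      fix k :: nat assume k: "k < 4"
      then have "2*k < 8" "2*k+1 < 8" by auto
      then show "v (2*k) * w (2*k+1) = v (2*k+1) * w (2*k)" using vF(1) k unfolding w_def by simp
    qed
    then have "pt4 w = pt4 v" by (rule pt4_eqI[OF v(1) vw])
    then show "p \<in> pt4 ` Wt \<tau> Z" using wW v(2) by (metis image_eqI)
  qed
qed

lemma Wt_zclosed: "tau_ok \<tau> Z \<Longrightarrow> zclosed (pt4 ` Wt \<tau> Z)"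
  using Wt_closed_eq Ft_multihom zclosed_I by metis

lemma Wt_line:
  assumes "P \<in> Wt \<tau> Z" "Q \<in> Wt \<tau> Z" "valid4 (\<lambda>i. P i + s * (Q i - P i))"
  shows "(\<lambda>i. P i + s * (Q i - P i)) \<in> Wt \<tau> Z"
  using assms unfolding Wt_def by auto

lemma Wt_irr:
  assumes "tau_ok \<tau> Z" "Wt \<tau> Z \<noteq> {}"
  shows "zirreducible (pt4 ` Wt \<tau> Z)"
proof (rule zirr_W)
  show "Wt \<tau> Z \<subseteq> {v. valid4 v}" unfolding Wt_def by auto
qed (use assms Wt_zclosed Wt_line in auto)

lemma Wt_mono: "Z \<subseteq> Z' \<Longrightarrow> Wt \<tau> Z' \<subseteq> Wt \<tau> Z"
  unfolding Wt_def by auto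

lemma surface_dim2:
  assumes ok0: "tau_ok \<tau> Z0" and ok1: "tau_ok \<tau> Z1" and ok2: "tau_ok \<tau> Z2"
    and sub: "Z2 \<subseteq> Z1" "Z1 \<subseteq> Z0"
    and ne: "w0 \<in> Wt \<tau> Z0"
    and st1: "w1 \<in> Wt \<tau> Z1" "pt4 w1 \<notin> pt4 ` Wt \<tau> Z0"
    and st2: "w2 \<in> Wt \<tau> Z2" "pt4 w2 \<notin> pt4 ` Wt \<tau> Z1"
    and S: "pt4 ` Wt \<tau> Z2 \<subseteq> S"
  shows "zdim_ge S 2"
proof -
  define Zs where "Zs = (\<lambda>i::nat. if i = 0 then pt4 ` Wt \<tau> Z0 else if i = 1 then pt4 ` Wt \<tau> Z1 else pt4 ` Wt \<tau> Z2)"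
  have s01: "Wt \<tau> Z0 \<subseteq> Wt \<tau> Z1" and s12: "Wt \<tau> Z1 \<subseteq> Wt \<tau> Z2" using sub Wt_mono by auto
  have i0: "zirreducible (pt4 ` Wt \<tau> Z0)" using Wt_irr[OF ok0] ne by auto
  have i1: "zirreducible (pt4 ` Wt \<tau> Z1)" using Wt_irr[OF ok1] st1 by auto
  have i2: "zirreducible (pt4 ` Wt \<tau> Z2)" using Wt_irr[OF ok2] st2 by auto
  have p01: "pt4 ` Wt \<tau> Z0 \<subset> pt4 ` Wt \<tau> Z1" using s01 st1 by blast
  have p12: "pt4 ` Wt \<tau> Z1 \<subset> pt4 ` Wt \<tau> Z2" using s12 st2 by blast
  have "\<forall>i\<le>2. zirreducible (Zs i) \<and> Zs i \<subseteq> S"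
  proof (intro allI impI)
    fix i :: nat assume "i \<le> 2"
    then have "i = 0 \<or> i = 1 \<or> i = 2" by auto
    then show "zirreducible (Zs i) \<and> Zs i \<subseteq> S"
      using i0 i1 i2 S p01 p12 unfolding Zs_def by (elim disjE) auto
  qed
  moreover have "\<forall>i<2. Zs i \<subset> Zs (Suc i)"
  proof (intro allI impI)
    fix i :: nat assume "i < 2"
    then have "i = 0 \<or> i = 1" by auto
    then show "Zs i \<subset> Zs (Suc i)" using p01 p12 unfolding Zs_def by (elim disjE) auto
  qed
  ultimately show ?thesis unfolding zdim_ge_def by blast
qed

definition V8 :: "complex \<Rightarrow> complex \<Rightarrow> complex \<Rightarrow> complex \<Rightarrow> complex \<Rightarrow> complex \<Rightarrow> complex \<Rightarrow> complex \<Rightarrow> nat \<Rightarrow> complex" where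
  "V8 a0 a1 a2 a3 a4 a5 a6 a7 = (\<lambda>i. if i = 0 then a0 else if i = 1 then a1 else if i = 2 then a2 else if i = 3 then a3
     else if i = 4 then a4 else if i = 5 then a5 else if i = 6 then a6 else if i = 7 then a7 else 0)"

lemma V8_simps[simp]:
  "V8 a0 a1 a2 a3 a4 a5 a6 a7 0 = a0" "V8 a0 a1 a2 a3 a4 a5 a6 a7 1 = a1" "V8 a0 a1 a2 a3 a4 a5 a6 a7 2 = a2"
  "V8 a0 a1 a2 a3 a4 a5 a6 a7 3 = a3" "V8 a0 a1 a2 a3 a4 a5 a6 a7 4 = a4" "V8 a0 a1 a2 a3 a4 a5 a6 a7 5 = a5"
  "V8 a0 a1 a2 a3 a4 a5 a6 a7 6 = a6" "V8 a0 a1 a2 a3 a4 a5 a6 a7 7 = a7"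
  by (simp_all add: V8_def)

lemma V8_valid:
  assumes "(a0, a1) \<noteq> (0,0)" "(a2, a3) \<noteq> (0,0)" "(a4, a5) \<noteq> (0,0)" "(a6, a7) \<noteq> (0,0)"
  shows "valid4 (V8 a0 a1 a2 a3 a4 a5 a6 a7)"
  unfolding valid4_def all4 using assms by (simp add: V8_def)

lemma pt4_neq:
  assumes "valid4 v" "k < 4" "v (2*k) * w (2*k+1) \<noteq> v (2*k+1) * w (2*k)"
  shows "pt4 v \<noteq> pt4 w"
  using pt4_eq_prop[OF assms(1) _ assms(2)] assms(3) by blast

lemma pt4_neq0:
  assumes "valid4 v" "v 0 * w 1 \<noteq> v 1 * w 0"
  shows "pt4 v \<noteq> pt4 w"
  using pt4_neq[OF assms(1), of 0 w] assms(2) by simp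

lemma pt4_neq2:
  assumes "valid4 v" "v 4 * w 5 \<noteq> v 5 * w 4"
  shows "pt4 v \<noteq> pt4 w"
  using pt4_neq[OF assms(1), of 2 w] assms(2) by simp

lemma three_card:
  assumes "p1 \<in> S" "p2 \<in> S" "p3 \<in> S" "p1 \<noteq> p2" "p1 \<noteq> p3" "p2 \<noteq> p3"
  shows "card S \<noteq> 2"
proof (cases "finite S")
  case True
  have "card {p1, p2, p3} = 3" using assms(4-6) by simp
  moreover have "card {p1, p2, p3} \<le> card S" using True assms(1-3) by (intro card_mono) auto
  ultimately show ?thesis by simp
next
  case False
  then show ?thesis by simp
qed

lemma notin_Wt:
  assumes "tau_ok \<tau> Z" "valid4 w" "i \<in> Z" "w i \<noteq> 0"
  shows "pt4 w \<notin> pt4 ` Wt \<tau> Z"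
proof
  assume "pt4 w \<in> pt4 ` Wt \<tau> Z"
  then have "pt4 w \<in> zero_locus (Ft \<tau> Z)" using Wt_closed_eq[OF assms(1)] by simp
  then have "\<forall>f\<in>Ft \<tau> Z. peval f w = 0" using zero_locus_iff[OF Ft_multihom[OF assms(1)] assms(2)] by blast
  then have "\<forall>i\<in>Z. w i = 0" unfolding Ft_zero_iff by blast
  then show False using assms(3,4) by blast
qed

lemma WtI:
  assumes "valid4 v" "\<forall>j<8. v j = v (\<tau> j)" "\<forall>i\<in>Z. v i = 0"
  shows "v \<in> Wt \<tau> Z"
  using assms unfolding Wt_def by blast

lemma WtD: "v \<in> Wt \<tau> Z \<Longrightarrow> valid4 v \<and> (\<forall>j<8. v j = v (\<tau> j))"
  unfolding Wt_def by blast

lemma surface_case: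
  assumes ok0: "tau_ok \<tau> Z0" and ok1: "tau_ok \<tau> Z1" and ok2: "tau_ok \<tau> {}"
    and sub: "Z1 \<subseteq> Z0"
    and w0: "w0 \<in> Wt \<tau> Z0"
    and w1: "w1 \<in> Wt \<tau> Z1" "i1 \<in> Z0" "w1 i1 \<noteq> 0"
    and w2: "w2 \<in> Wt \<tau> {}" "i2 \<in> Z1" "w2 i2 \<noteq> 0"
    and S: "\<And>w. w \<in> Wt \<tau> {} \<Longrightarrow> pt4 w \<in> S"
  shows "zdim_ge S 2"
proof (rule surface_dim2[OF ok0 ok1 ok2 _ sub w0 w1(1) _ w2(1)])
  show "pt4 w1 \<notin> pt4 ` Wt \<tau> Z0" using notin_Wt[of \<tau> Z0 w1 i1] ok0 w1 WtD[OF w1(1)] by blast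
  show "pt4 w2 \<notin> pt4 ` Wt \<tau> Z1" using notin_Wt[of \<tau> Z1 w2 i2] ok1 w2 WtD[OF w2(1)] by blast
  show "pt4 ` Wt \<tau> {} \<subseteq> S" using S by blast
qed simp

lemma not_curve2: "zdim_ge S 2 \<Longrightarrow> \<not> is_curve S"
  unfolding is_curve_def by blast

lemma not_curve1: "\<not> zdim_ge S 1 \<Longrightarrow> \<not> is_curve S"
  unfolding is_curve_def by blast

lemma V8_Suc0[simp]: "V8 a0 a1 a2 a3 a4 a5 a6 a7 (Suc 0) = a1"
  by (simp add: V8_def)

lemma sing_Sa:
  assumes "v 2 = v 1" "v 3 = v 0" "v 6 = v 5" "v 7 = v 4"
  shows "Gabcd 0 0 0 d v = 0 \<and> (\<forall>i<8. dG 0 0 0 d v i = 0)"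
  unfolding all8 Gabcd_def dG_def Let_def assms by (simp add: algebra_simps)

lemma sing_Sb:
  assumes "v 2 = v 0" "v 3 = v 1" "v 6 = v 4" "v 7 = v 5"
  shows "Gabcd 0 0 c 0 v = 0 \<and> (\<forall>i<8. dG 0 0 c 0 v i = 0)"
  unfolding all8 Gabcd_def dG_def Let_def assms by (simp add: algebra_simps)

lemma sing_Sc1:
  assumes "v 4 = v 0" "v 5 = v 1" "v 6 = v 2" "v 7 = v 3"
  shows "Gabcd a (-a) a (-a) v = 0 \<and> (\<forall>i<8. dG a (-a) a (-a) v i = 0)"
  unfolding all8 Gabcd_def dG_def Let_def assms by (simp add: algebra_simps)

lemma sing_Sc2:
  assumes "v 4 = v 3" "v 5 = v 2" "v 6 = v 1" "v 7 = v 0"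
  shows "Gabcd a (-a) a a v = 0 \<and> (\<forall>i<8. dG a (-a) a a v i = 0)"
  unfolding all8 Gabcd_def dG_def Let_def assms by (simp add: algebra_simps)

lemma sing_Sc3:
  assumes "v 4 = v 2" "v 5 = v 3" "v 6 = v 0" "v 7 = v 1"
  shows "Gabcd a (-a) (-a) (-a) v = 0 \<and> (\<forall>i<8. dG a (-a) (-a) (-a) v i = 0)"
  unfolding all8 Gabcd_def dG_def Let_def assms by (simp add: algebra_simps)

lemma sing_Sc4:
  assumes "v 4 = v 1" "v 5 = v 0" "v 6 = v 3" "v 7 = v 2"
  shows "Gabcd a (-a) (-a) a v = 0 \<and> (\<forall>i<8. dG a (-a) (-a) a v i = 0)"
  unfolding all8 Gabcd_def dG_def Let_def assms by (simp add: algebra_simps)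

lemma surface_full:
  assumes ok0: "tau_ok \<tau> Z0" and ok1: "tau_ok \<tau> Z1" and ok2: "tau_ok \<tau> {}"
    and sub: "Z1 \<subseteq> Z0"
    and w0: "w0 \<in> Wt \<tau> Z0"
    and w1: "w1 \<in> Wt \<tau> Z1" "i1 \<in> Z0" "w1 i1 \<noteq> 0"
    and w2: "w2 \<in> Wt \<tau> {}" "i2 \<in> Z1" "w2 i2 \<noteq> 0"
    and p3: "p3 \<in> Wt \<tau> {}"
    and d: "w0 0 * w2 1 \<noteq> w0 1 * w2 0" "w0 0 * p3 1 \<noteq> w0 1 * p3 0" "w2 0 * p3 1 \<noteq> w2 1 * p3 0"
    and S: "\<And>w. w \<in> Wt \<tau> {} \<Longrightarrow> pt4 w \<in> S"
  shows "card S \<noteq> 2 \<and> \<not> is_curve S"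
proof
  show "\<not> is_curve S" by (rule not_curve2, rule surface_case[OF ok0 ok1 ok2 sub w0 w1 w2 S])
  have w0': "w0 \<in> Wt \<tau> {}" using w0 Wt_mono[of "{}" Z0 \<tau>] by blast
  have v0: "valid4 w0" and v2: "valid4 w2" using WtD w0 w2(1) by blast+
  show "card S \<noteq> 2"
    by (rule three_card[OF S[OF w0'] S[OF w2(1)] S[OF p3]])
       (use pt4_neq0[OF v0 d(1)] pt4_neq0[OF v0 d(2)] pt4_neq0[OF v2 d(3)] in auto)
qed

lemma case_Sa:
  assumes "a = 0" "b = 0" "c = 0"
  shows "card (sing_locus a b c d) \<noteq> 2 \<and> \<not> is_curve (sing_locus a b c d)"
proof -
  define \<tau> where "\<tau> = (\<lambda>j::nat. if j = 2 then 1 else if j = 3 then 0 else if j = 6 then 5 else if j = 7 then 4 else j)"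
  have ok: "tau_ok \<tau> {1,5}" "tau_ok \<tau> {1}" "tau_ok \<tau> {}" unfolding tau_ok_def all8 all4 \<tau>_def by simp_all
  show ?thesis
  proof (rule surface_full[OF ok(1) ok(2) ok(3), of "V8 1 0 0 1 1 0 0 1" "V8 1 0 0 1 1 1 1 1" 5 "V8 1 1 1 1 1 0 0 1" 1 "V8 0 1 1 0 1 0 0 1"])
    fix w assume "w \<in> Wt \<tau> {}"
    then have vw: "valid4 w" and e: "\<forall>j<8. w j = w (\<tau> j)" using WtD by blast+
    have "w 2 = w 1" "w 3 = w 0" "w 6 = w 5" "w 7 = w 4" using e unfolding all8 \<tau>_def by simp_all
    then have "Gabcd 0 0 0 d w = 0 \<and> (\<forall>i<8. dG 0 0 0 d w i = 0)" by (rule sing_Sa)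
    then show "pt4 w \<in> sing_locus a b c d" using sing_memI[OF vw] assms by simp
  qed (auto intro!: WtI V8_valid simp: all8 \<tau>_def)
qed

lemma case_Sb:
  assumes "a = 0" "b = 0" "d = 0"
  shows "card (sing_locus a b c d) \<noteq> 2 \<and> \<not> is_curve (sing_locus a b c d)"
proof -
  define \<tau> where "\<tau> = (\<lambda>j::nat. if j = 2 then 0 else if j = 3 then 1 else if j = 6 then 4 else if j = 7 then 5 else j)"
  have ok: "tau_ok \<tau> {1,5}" "tau_ok \<tau> {1}" "tau_ok \<tau> {}" unfolding tau_ok_def all8 all4 \<tau>_def by simp_all
  show ?thesis
  proof (rule surface_full[OF ok(1) ok(2) ok(3), of "V8 1 0 1 0 1 0 1 0" "V8 1 0 1 0 1 1 1 1" 5 "V8 1 1 1 1 1 0 1 0" 1 "V8 0 1 0 1 1 0 1 0"])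
    fix w assume "w \<in> Wt \<tau> {}"
    then have vw: "valid4 w" and e: "\<forall>j<8. w j = w (\<tau> j)" using WtD by blast+
    have "w 2 = w 0" "w 3 = w 1" "w 6 = w 4" "w 7 = w 5" using e unfolding all8 \<tau>_def by simp_all
    then have "Gabcd 0 0 c 0 w = 0 \<and> (\<forall>i<8. dG 0 0 c 0 w i = 0)" by (rule sing_Sb)
    then show "pt4 w \<in> sing_locus a b c d" using sing_memI[OF vw] assms by simp
  qed (auto intro!: WtI V8_valid simp: all8 \<tau>_def)
qed

lemma case_Sc1:
  assumes "b = -a" "c = a" "d = -a"
  shows "card (sing_locus a b c d) \<noteq> 2 \<and> \<not> is_curve (sing_locus a b c d)"
proof -
  define \<tau> where "\<tau> = (\<lambda>j::nat. if j = 4 then 0 else if j = 5 then 1 else if j = 6 then 2 else if j = 7 then 3 else j)"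
  have ok: "tau_ok \<tau> {1,3}" "tau_ok \<tau> {1}" "tau_ok \<tau> {}" unfolding tau_ok_def all8 all4 \<tau>_def by simp_all
  show ?thesis
  proof (rule surface_full[OF ok(1) ok(2) ok(3), of "V8 1 0 1 0 1 0 1 0" "V8 1 0 1 1 1 0 1 1" 3 "V8 1 1 1 0 1 1 1 0" 1 "V8 0 1 1 0 0 1 1 0"])
    fix w assume "w \<in> Wt \<tau> {}"
    then have vw: "valid4 w" and e: "\<forall>j<8. w j = w (\<tau> j)" using WtD by blast+
    have "w 4 = w 0" "w 5 = w 1" "w 6 = w 2" "w 7 = w 3" using e unfolding all8 \<tau>_def by simp_all
    then have "Gabcd a (-a) a (-a) w = 0 \<and> (\<forall>i<8. dG a (-a) a (-a) w i = 0)" by (rule sing_Sc1)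
    then show "pt4 w \<in> sing_locus a b c d" using sing_memI[OF vw] assms by simp
  qed (auto intro!: WtI V8_valid simp: all8 \<tau>_def)
qed

lemma case_Sc2:
  assumes "b = -a" "c = a" "d = a"
  shows "card (sing_locus a b c d) \<noteq> 2 \<and> \<not> is_curve (sing_locus a b c d)"
proof -
  define \<tau> where "\<tau> = (\<lambda>j::nat. if j = 4 then 3 else if j = 5 then 2 else if j = 6 then 1 else if j = 7 then 0 else j)"
  have ok: "tau_ok \<tau> {1,3}" "tau_ok \<tau> {1}" "tau_ok \<tau> {}" unfolding tau_ok_def all8 all4 \<tau>_def by simp_all
  show ?thesis
  proof (rule surface_full[OF ok(1) ok(2) ok(3), of "V8 1 0 1 0 0 1 0 1" "V8 1 0 1 1 1 1 0 1" 3 "V8 1 1 1 0 0 1 1 1" 1 "V8 0 1 1 0 0 1 1 0"])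
    fix w assume "w \<in> Wt \<tau> {}"
    then have vw: "valid4 w" and e: "\<forall>j<8. w j = w (\<tau> j)" using WtD by blast+
    have "w 4 = w 3" "w 5 = w 2" "w 6 = w 1" "w 7 = w 0" using e unfolding all8 \<tau>_def by simp_all
    then have "Gabcd a (-a) a a w = 0 \<and> (\<forall>i<8. dG a (-a) a a w i = 0)" by (rule sing_Sc2)
    then show "pt4 w \<in> sing_locus a b c d" using sing_memI[OF vw] assms by simp
  qed (auto intro!: WtI V8_valid simp: all8 \<tau>_def)
qed

lemma case_Sc3:
  assumes "b = -a" "c = -a" "d = -a"
  shows "card (sing_locus a b c d) \<noteq> 2 \<and> \<not> is_curve (sing_locus a b c d)"
proof -
  define \<tau> where "\<tau> = (\<lambda>j::nat. if j = 4 then 2 else if j = 5 then 3 else if j = 6 then 0 else if j = 7 then 1 else j)"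
  have ok: "tau_ok \<tau> {1,3}" "tau_ok \<tau> {1}" "tau_ok \<tau> {}" unfolding tau_ok_def all8 all4 \<tau>_def by simp_all
  show ?thesis
  proof (rule surface_full[OF ok(1) ok(2) ok(3), of "V8 1 0 1 0 1 0 1 0" "V8 1 0 1 1 1 1 1 0" 3 "V8 1 1 1 0 1 0 1 1" 1 "V8 0 1 1 0 1 0 0 1"])
    fix w assume "w \<in> Wt \<tau> {}"
    then have vw: "valid4 w" and e: "\<forall>j<8. w j = w (\<tau> j)" using WtD by blast+
    have "w 4 = w 2" "w 5 = w 3" "w 6 = w 0" "w 7 = w 1" using e unfolding all8 \<tau>_def by simp_all
    then have "Gabcd a (-a) (-a) (-a) w = 0 \<and> (\<forall>i<8. dG a (-a) (-a) (-a) w i = 0)" by (rule sing_Sc3)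
    then show "pt4 w \<in> sing_locus a b c d" using sing_memI[OF vw] assms by simp
  qed (auto intro!: WtI V8_valid simp: all8 \<tau>_def)
qed

lemma case_Sc4:
  assumes "b = -a" "c = -a" "d = a"
  shows "card (sing_locus a b c d) \<noteq> 2 \<and> \<not> is_curve (sing_locus a b c d)"
proof -
  define \<tau> where "\<tau> = (\<lambda>j::nat. if j = 4 then 1 else if j = 5 then 0 else if j = 6 then 3 else if j = 7 then 2 else j)"
  have ok: "tau_ok \<tau> {1,3}" "tau_ok \<tau> {1}" "tau_ok \<tau> {}" unfolding tau_ok_def all8 all4 \<tau>_def by simp_all
  show ?thesis
  proof (rule surface_full[OF ok(1) ok(2) ok(3), of "V8 1 0 1 0 0 1 0 1" "V8 1 0 1 1 0 1 1 1" 3 "V8 1 1 1 0 1 1 0 1" 1 "V8 0 1 1 0 1 0 0 1"])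
    fix w assume "w \<in> Wt \<tau> {}"
    then have vw: "valid4 w" and e: "\<forall>j<8. w j = w (\<tau> j)" using WtD by blast+
    have "w 4 = w 1" "w 5 = w 0" "w 6 = w 3" "w 7 = w 2" using e unfolding all8 \<tau>_def by simp_all
    then have "Gabcd a (-a) (-a) a w = 0 \<and> (\<forall>i<8. dG a (-a) (-a) a w i = 0)" by (rule sing_Sc4)
    then show "pt4 w \<in> sing_locus a b c d" using sing_memI[OF vw] assms by simp
  qed (auto intro!: WtI V8_valid simp: all8 \<tau>_def)
qed

lemma pt4_neq1:
  assumes "valid4 v" "v 2 * w 3 \<noteq> v 3 * w 2"
  shows "pt4 v \<noteq> pt4 w"
  using pt4_neq[OF assms(1), of 1 w] assms(2) by simp

definition "P1 = V8 1 1 1 1 1 1 1 1"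
definition "P2 = V8 1 (-1) 1 (-1) 1 (-1) 1 (-1)"
definition "P3a = V8 1 1 1 1 1 (-1) 1 (-1)"
definition "P3b = V8 1 (-1) 1 1 1 (-1) 1 1"
definition "P3c = V8 1 (-1) 1 1 1 1 1 (-1)"

lemma P_valid: "valid4 P1" "valid4 P2" "valid4 P3a" "valid4 P3b" "valid4 P3c"
  unfolding P1_def P2_def P3a_def P3b_def P3c_def by (auto intro!: V8_valid)

lemma P12_sing:
  assumes "b = -a"
  shows "pt4 P1 \<in> sing_locus a b c d" "pt4 P2 \<in> sing_locus a b c d"
  by (rule sing_memI[OF P_valid(1)] sing_memI[OF P_valid(2)];
      simp add: assms P1_def P2_def Gabcd_def dG_def all8 field_simps)+

lemma P3a_sing: "pt4 P3a \<in> sing_locus 0 0 c d"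
  by (rule sing_memI[OF P_valid(3)]; simp add: P3a_def Gabcd_def dG_def all8 field_simps)

lemma P3b_sing: "d = -c \<Longrightarrow> pt4 P3b \<in> sing_locus a (-a) c d"
  by (rule sing_memI[OF P_valid(4)]; simp add: P3b_def Gabcd_def dG_def all8 field_simps)

lemma P3c_sing: "d = c \<Longrightarrow> pt4 P3c \<in> sing_locus a (-a) c d"
  by (rule sing_memI[OF P_valid(5)]; simp add: P3c_def Gabcd_def dG_def all8 field_simps)

lemma P_neq: "pt4 P1 \<noteq> pt4 P2" "pt4 P1 \<noteq> pt4 P3a" "pt4 P2 \<noteq> pt4 P3a"
  "pt4 P1 \<noteq> pt4 P3b" "pt4 P2 \<noteq> pt4 P3b" "pt4 P1 \<noteq> pt4 P3c" "pt4 P2 \<noteq> pt4 P3c"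
proof -
  show "pt4 P1 \<noteq> pt4 P2" by (rule pt4_neq0[OF P_valid(1)]) (simp add: P1_def P2_def)
  show "pt4 P1 \<noteq> pt4 P3a" by (rule pt4_neq2[OF P_valid(1)]) (simp add: P1_def P3a_def)
  show "pt4 P2 \<noteq> pt4 P3a" by (rule pt4_neq0[OF P_valid(2)]) (simp add: P2_def P3a_def)
  show "pt4 P1 \<noteq> pt4 P3b" by (rule pt4_neq0[OF P_valid(1)]) (simp add: P1_def P3b_def)
  show "pt4 P2 \<noteq> pt4 P3b" by (rule pt4_neq1[OF P_valid(2)]) (simp add: P2_def P3b_def)
  show "pt4 P1 \<noteq> pt4 P3c" by (rule pt4_neq0[OF P_valid(1)]) (simp add: P1_def P3c_def)
  show "pt4 P2 \<noteq> pt4 P3c" by (rule pt4_neq1[OF P_valid(2)]) (simp add: P2_def P3c_def)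
qed

lemma fin_F1a:
  assumes "a = 0" "b = 0" "c \<noteq> 0" "d \<noteq> 0"
  shows "card (sing_locus a b c d) \<noteq> 2 \<and> \<not> is_curve (sing_locus a b c d)"
proof
  show "\<not> is_curve (sing_locus a b c d)" by (rule not_curve1, rule case_F1a[OF assms])
  show "card (sing_locus a b c d) \<noteq> 2"
  proof -
    have ba: "b = -a" using assms by simp
    have "pt4 P3a \<in> sing_locus a b c d" using P3a_sing[of c d] assms(1,2) by simp
    then show ?thesis using three_card[OF P12_sing[OF ba] _ P_neq(1,2,3)] by blast
  qed
qed

lemma fin_F2a:
  assumes "b = -a" "a \<noteq> 0" "c = 0" "d = 0"
  shows "card (sing_locus a b c d) \<noteq> 2 \<and> \<not> is_curve (sing_locus a b c d)"
proof
  show "\<not> is_curve (sing_locus a b c d)" by (rule not_curve1, rule case_F2a[OF assms])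
  show "card (sing_locus a b c d) \<noteq> 2"
  proof -
    have "pt4 P3b \<in> sing_locus a b c d" using P3b_sing[of d c a] assms by simp
    then show ?thesis using three_card[OF P12_sing[OF assms(1)] _ P_neq(1,4,5)] by blast
  qed
qed

lemma fin_F2b:
  assumes "b = -a" "a \<noteq> 0" "c \<noteq> 0" "d = c \<or> d = -c" "c * c \<noteq> a * a"
  shows "card (sing_locus a b c d) \<noteq> 2 \<and> \<not> is_curve (sing_locus a b c d)"
proof
  have dd: "d * d = c * c" using assms(4) by auto
  show "\<not> is_curve (sing_locus a b c d)" by (rule not_curve1, rule case_F2b[OF assms(1,2,3) dd assms(5)])
  show "card (sing_locus a b c d) \<noteq> 2"
    using assms(4)
  proof
    assume "d = c"
    then have "pt4 P3c \<in> sing_locus a b c d" using P3c_sing[of d c a] assms(1) by simp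
    then show ?thesis using three_card[OF P12_sing[OF assms(1)] _ P_neq(1,6,7)] by blast
  next
    assume "d = -c"
    then have "pt4 P3b \<in> sing_locus a b c d" using P3b_sing[of d c a] assms(1) by simp
    then show ?thesis using three_card[OF P12_sing[OF assms(1)] _ P_neq(1,4,5)] by blast
  qed
qed

lemma D_ids:
  fixes c0 c1 c2 c3 :: complex
  defines "x \<equiv> 2 * (c0*c3 - c1*c2)" and "y \<equiv> c0^2 - c1^2 - c2^2 + c3^2"
    and "z \<equiv> 2 * (c0*c1 - c2*c3)" and "t \<equiv> c0^2 + c1^2 - c2^2 - c3^2"
  shows "D12 c0 c1 c2 c3 = t^2 - z^2" "D13 c0 c1 c2 c3 = x^2 + t^2" "4 * D14 c0 c1 c2 c3 = t^2 - y^2"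
  unfolding D12_def D13_def D14_def x_def y_def z_def t_def by algebra+

lemma witness:
  fixes a b c d :: complex
  assumes b: "b = -a" and a0: "a \<noteq> 0" and cd1: "c + d \<noteq> 0" and cd2: "c \<noteq> d"
  shows "\<exists>c0 c1 c2 c3 :: complex. (c0, c1, c2, c3) \<noteq> (0, 0, 0, 0) \<and> c0^2 \<noteq> c2^2 \<and>
           D12 c0 c1 c2 c3 * D13 c0 c1 c2 c3 * D14 c0 c1 c2 c3 \<noteq> 0 \<and>
           (let x = 2 * (c0*c3 - c1*c2);
                y = c0^2 - c1^2 - c2^2 + c3^2;
                z = 2 * (c0*c1 - c2*c3);
                t = c0^2 + c1^2 - c2^2 - c3^2
            in \<exists>r::complex. r \<noteq> 0 \<and>
                 a = r * (x^2 - y^2) \<and> b = r * (t^2 - z^2) \<and>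
                 c = r * (z^2 + t^2) \<and> d = r * (x^2 + y^2))"
proof -
  define X where "X = csqrt ((a+d)/2)"
  define Y where "Y = csqrt ((d-a)/2)"
  define Z where "Z = csqrt ((c+a)/2)"
  define T where "T = csqrt ((c-a)/2)"
  have X2: "X^2 = (a+d)/2" unfolding X_def by (rule power2_csqrt)
  have Y2: "Y^2 = (d-a)/2" unfolding Y_def by (rule power2_csqrt)
  have Z2: "Z^2 = (c+a)/2" unfolding Z_def by (rule power2_csqrt)
  have T2: "T^2 = (c-a)/2" unfolding T_def by (rule power2_csqrt)
  have YT: "Y + T \<noteq> 0"
  proof
    assume "Y + T = 0"
    then have "Y = -T" by (simp add: add_eq_0_iff)
    then have "Y^2 = T^2" by simp
    then have "(d-a)/2 = (c-a)/2" using Y2 T2 by simp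
    then show False using cd2 by (simp add: field_simps)
  qed
  define h where "h = (Y + T)/2"
  have h0: "h \<noteq> 0" using YT unfolding h_def by simp
  define c0 where "c0 = csqrt h"
  have c02: "c0^2 = h" unfolding c0_def by (rule power2_csqrt)
  have c0n: "c0 \<noteq> 0" using c02 h0 by auto
  define c1 where "c1 = Z / (2*c0)"
  define c3 where "c3 = X / (2*c0)"
  define c2 :: complex where "c2 = 0"
  have c12: "c1^2 = Z^2/(4*h)" unfolding c1_def using c02 by (simp add: power_divide power_mult_distrib)
  have c32: "c3^2 = X^2/(4*h)" unfolding c3_def using c02 by (simp add: power_divide power_mult_distrib)
  have k1: "(Y+T)^2 + X^2 - Z^2 = 2*Y*(Y+T)"
  proof -
    have "(Y+T)^2 + X^2 - Z^2 - 2*Y*(Y+T) = T^2 - Y^2 + X^2 - Z^2" by (simp add: power2_eq_square algebra_simps)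
    also have "\<dots> = 0" unfolding X2 Y2 Z2 T2 by (simp add: field_simps)
    finally show ?thesis by simp
  qed
  have k2: "(Y+T)^2 + Z^2 - X^2 = 2*T*(Y+T)"
  proof -
    have "(Y+T)^2 + Z^2 - X^2 - 2*T*(Y+T) = Y^2 - T^2 + Z^2 - X^2" by (simp add: power2_eq_square algebra_simps)
    also have "\<dots> = 0" unfolding X2 Y2 Z2 T2 by (simp add: field_simps)
    finally show ?thesis by simp
  qed
  have ex: "2 * (c0*c3 - c1*c2) = X" unfolding c3_def c2_def using c0n by simp
  have ez: "2 * (c0*c1 - c2*c3) = Z" unfolding c1_def c2_def using c0n by simp
  have ey: "c0^2 - c1^2 - c2^2 + c3^2 = Y"
  proof -
    have "c0^2 - c1^2 - c2^2 + c3^2 = h - Z^2/(4*h) + X^2/(4*h)" unfolding c02 c12 c32 c2_def by simp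
    also have "\<dots> = (4*h^2 + X^2 - Z^2)/(4*h)" using h0 by (simp add: field_simps power2_eq_square)
    also have "4*h^2 = (Y+T)^2" unfolding h_def by (simp add: power2_eq_square field_simps)
    also have "((Y+T)^2 + X^2 - Z^2)/(4*h) = Y"
    proof -
      have e: "4*h = 2*(Y+T)" unfolding h_def by simp
      have "((Y+T)^2 + X^2 - Z^2)/(4*h) = (Y*(2*(Y+T)))/(2*(Y+T))" unfolding k1 e by (simp add: mult_ac)
      also have "\<dots> = Y" by (rule nonzero_mult_div_cancel_right, rule no_zero_divisors) (simp_all add: YT)
      finally show ?thesis .
    qed
    finally show ?thesis .
  qed
  have et: "c0^2 + c1^2 - c2^2 - c3^2 = T"
  proof -
    have "c0^2 + c1^2 - c2^2 - c3^2 = h + Z^2/(4*h) - X^2/(4*h)" unfolding c02 c12 c32 c2_def by simp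
    also have "\<dots> = (4*h^2 + Z^2 - X^2)/(4*h)" using h0 by (simp add: field_simps power2_eq_square)
    also have "4*h^2 = (Y+T)^2" unfolding h_def by (simp add: power2_eq_square field_simps)
    also have "((Y+T)^2 + Z^2 - X^2)/(4*h) = T"
    proof -
      have e: "4*h = 2*(Y+T)" unfolding h_def by simp
      have "((Y+T)^2 + Z^2 - X^2)/(4*h) = (T*(2*(Y+T)))/(2*(Y+T))" unfolding k2 e by (simp add: mult_ac)
      also have "\<dots> = T" by (rule nonzero_mult_div_cancel_right, rule no_zero_divisors) (simp_all add: YT)
      finally show ?thesis .
    qed
    finally show ?thesis .
  qed
  have D12: "D12 c0 c1 c2 c3 = -a" using D_ids(1)[of c0 c1 c2 c3] unfolding et ez T2 Z2 by (simp add: field_simps)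
  have D13a: "D13 c0 c1 c2 c3 = X^2 + T^2" using D_ids(2)[of c0 c1 c2 c3] unfolding et ex by simp
  have D13b: "X^2 + T^2 = (c+d)/2" unfolding X2 T2 by (simp add: field_simps)
  have D13: "D13 c0 c1 c2 c3 = (c+d)/2" using D13a D13b by simp
  have D14: "4 * D14 c0 c1 c2 c3 = (c-d)/2" using D_ids(3)[of c0 c1 c2 c3] unfolding et ey T2 Y2 by (simp add: field_simps)
  have D14n: "D14 c0 c1 c2 c3 \<noteq> 0" using D14 cd2 by auto
  have D13n: "D13 c0 c1 c2 c3 \<noteq> 0"
  proof
    assume "D13 c0 c1 c2 c3 = 0"
    then have "(c+d)/2 = 0" using D13 by simp
    then show False using cd1 by simp
  qed
  have Dn: "D12 c0 c1 c2 c3 * D13 c0 c1 c2 c3 * D14 c0 c1 c2 c3 \<noteq> 0"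
    using D12 D13n D14n a0 by simp
  have c0c2: "c0^2 \<noteq> c2^2" using c02 h0 unfolding c2_def by simp
  have nz: "(c0, c1, c2, c3) \<noteq> (0, 0, 0, 0)" using c0n by simp
  have rel: "a = 1 * (X^2 - Y^2) \<and> b = 1 * (T^2 - Z^2) \<and> c = 1 * (Z^2 + T^2) \<and> d = 1 * (X^2 + Y^2)"
    unfolding X2 Y2 Z2 T2 b by (simp add: field_simps)
  show ?thesis
    apply (rule exI[of _ c0], rule exI[of _ c1], rule exI[of _ c2], rule exI[of _ c3])
    unfolding Let_def ex ey ez et using nz c0c2 Dn rel one_neq_zero by blast
qed

theorem mainTheorem20:
  fixes a b c d :: complex
  assumes nz: "(a, b, c, d) \<noteq> (0, 0, 0, 0)"
    and ab: "a + b = 0"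
    and sing: "card (sing_locus a b c d) = 2 \<or> is_curve (sing_locus a b c d)"
  shows "\<exists>c0 c1 c2 c3 :: complex. (c0, c1, c2, c3) \<noteq> (0, 0, 0, 0) \<and> c0^2 \<noteq> c2^2 \<and>
           D12 c0 c1 c2 c3 * D13 c0 c1 c2 c3 * D14 c0 c1 c2 c3 \<noteq> 0 \<and>
           (let x = 2 * (c0*c3 - c1*c2);
                y = c0^2 - c1^2 - c2^2 + c3^2;
                z = 2 * (c0*c1 - c2*c3);
                t = c0^2 + c1^2 - c2^2 - c3^2
            in \<exists>r::complex. r \<noteq> 0 \<and>
                 a = r * (x^2 - y^2) \<and> b = r * (t^2 - z^2) \<and>
                 c = r * (z^2 + t^2) \<and> d = r * (x^2 + y^2))"
proof -
  have b: "b = -a"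
  proof -
    have "b = (a + b) - a" by simp
    then show ?thesis using ab by simp
  qed
  show ?thesis
  proof (cases "a \<noteq> 0 \<and> c + d \<noteq> 0 \<and> c \<noteq> d")
    case True
    then show ?thesis using witness[OF b] by blast
  next
    case False
    have "card (sing_locus a b c d) \<noteq> 2 \<and> \<not> is_curve (sing_locus a b c d)"
    proof (cases "a = 0")
      case a0: True
      then have b0: "b = 0" using b by simp
      show ?thesis
      proof (cases "c = 0")
        case True
        show ?thesis by (rule case_Sa[OF a0 b0 True])
      next
        case c0: False
        show ?thesis
        proof (cases "d = 0")
          case True
          show ?thesis by (rule case_Sb[OF a0 b0 True])
        next
          case False
          show ?thesis by (rule fin_F1a[OF a0 b0 c0 False])
        qed
      qed
    next
      case a0: False
      then have cd: "d = c \<or> d = -c" using False by (auto simp: add_eq_0_iff)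
      show ?thesis
      proof (cases "c = 0")
        case True
        then have "d = 0" using cd by auto
        then show ?thesis by (rule fin_F2a[OF b a0 True])
      next
        case c0: False
        show ?thesis
        proof (cases "c * c = a * a")
          case True
          then have "(c - a) * (c + a) = 0" by (simp add: algebra_simps)
          then have ca: "c = a \<or> c = -a" by (auto simp: add_eq_0_iff)
          show ?thesis
          proof (cases "c = a")
            case ca1: True
            show ?thesis using cd
            proof
              assume "d = c" then show ?thesis using case_Sc2[OF b ca1] ca1 by simp
            next
              assume "d = -c" then show ?thesis using case_Sc1[OF b ca1] ca1 by simp
            qed
          next
            case False
            then have ca1: "c = -a" using ca by simp
            show ?thesis using cd
            proof
              assume "d = c" then show ?thesis using case_Sc3[OF b ca1] ca1 by simp
            next
              assume "d = -c" then show ?thesis using case_Sc4[OF b ca1] ca1 by simp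
            qed
          qed
        next
          case False
          show ?thesis by (rule fin_F2b[OF b a0 c0 cd False])
        qed
      qed
    qed
    then show ?thesis using sing by blast
  qed
qed

end
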